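(* Let Assumption (W) hold, let $S\subseteq\mathbb R^2$ be bounded and open, and let $(y_h,n_h)\subseteq H^1(\Omega;\mathbb R^3)\times H^1(\Omega_{top};\mathbb S^2)$ satisfy $\limsup_{h\to0}\mathcal E_h(y_h,n_h)<\infty$. Let $1<p<2$ be defined by $q_W=\frac{4p}{2-p}$. Then $\limsup_{h\to0}\frac1{h^2}\int_\Omega\mathrm{dist}^2(\nabla_hy_h,SO(3))<\infty$, $\limsup_{h\to0}\int_\Omega|\nabla_hy_h|^{q_W}+|\det\nabla_hy_h|^{-q_W/2}<\infty$, $\limsup_{h\to0}\int_{\Omega_{top}}|\nabla_hn_h(\nabla_hy_h)^{-1}|^2|\det\nabla_hy_h|<\infty$, and $\limsup_{h\to0}\int_{\Omega_{top}}|\nabla_hn_h|^p<\infty$. Moreover, there is $\bar h>0$ (depending on the sequence) such that $\det\nabla_hy_h>0$ a.e. in $\Omega$ for all $0<h\le\bar h$.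
   Context: $\Omega:=S\times(-\frac12,\frac12)$, $\Omega_{top}:=S\times(0,\frac12)$; $x=(x',x_3)$; $\nabla_h:=(\partial_1,\partial_2,\frac1h\partial_3)$; $\mathbb S^2$ the unit sphere. Assumption (W): there are $C_W>0$, $q_W>4$ and a monotone $r_W:[0,\infty)\to[0,\infty]$ with $r_W(\delta)\to0$ as $\delta\to0$, and $W:(-\frac12,\frac12)\times\mathbb R^{3\times3}\to[0,\infty]$ Borel with, for all $x_3$: (W1) $W(x_3,RF)=W(x_3,F)$ for $R\in SO(3)$; (W2) $W(x_3,F)\ge C_W^{-1}\mathrm{dist}^2(F,SO(3))$, and $W(x_3,F)\le C_W\mathrm{dist}^2(F,SO(3))$ whenever $\mathrm{dist}^2(F,SO(3))\le1/C_W$; (W3) a quadratic form $Q(x_3,\cdot)$ with $|W(x_3,I+G)-Q(x_3,G)|\le|G|^2r_W(|G|)$; (W4) $W(x_3,F)\ge C_W^{-1}\max\{|F|^{q_W},(\det F)^{-q_W/2}\}-C_W$ if $\det F>0$, $W=+\infty$ if $\det F\le0$. 3d energy: fix $\bar\varepsilon>0$, $\bar r\in\mathbb R$; for $h>0$ with $|h\bar r|<1$, $r_h:=1+h\bar r$, $L_h(n):=r_h^{-1/3}(I+(r_h-1)n\otimes n)$ for $n\in\mathbb S^2$, and $\mathcal E_h(y,n):=\frac1{h^2}\int_{\Omega\setminus\Omega_{top}}W(x_3,\nabla_hy)dx+\frac1{h^2}\int_{\Omega_{top}}W(x_3,L_h(n)^{-1/2}\nabla_hy)dx+\bar\varepsilon^2\int_{\Omega_{top}}|\nabla_hn(\nabla_hy)^{-1}|^2\det(\nabla_hy)dx$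 ($+\infty$ if $\det\nabla_hy\le0$ on a set of positive measure). *)

theory Defs
  imports "HOL-Analysis.Analysis"
begin

definition Omega :: "(real^2) set \<Rightarrow> (real^3) set" where
  "Omega S = {x. vector [x$1, x$2] \<in> S \<and> -1/2 < x$3 \<and> x$3 < 1/2}"

definition Omega_top :: "(real^2) set \<Rightarrow> (real^3) set" where
  "Omega_top S = {x. vector [x$1, x$2] \<in> S \<and> 0 < x$3 \<and> x$3 < 1/2}"

definition partial :: "(real^3 \<Rightarrow> real) \<Rightarrow> 3 \<Rightarrow> real^3 \<Rightarrow> real" where
  "partial f j x = frechet_derivative f (at x) (axis j 1)"

fun Ck :: "nat \<Rightarrow> (real^3 \<Rightarrow> real) \<Rightarrow> bool" where
  "Ck 0 f = continuous_on UNIV f"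
| "Ck (Suc k) f = (f differentiable_on UNIV \<and> (\<forall>j. Ck k (partial f j)))"

definition smooth :: "(real^3 \<Rightarrow> real) \<Rightarrow> bool" where
  "smooth f = (\<forall>k. Ck k f)"

definition test_function :: "(real^3) set \<Rightarrow> (real^3 \<Rightarrow> real) \<Rightarrow> bool" where
  "test_function U \<phi> = (smooth \<phi> \<and> compact (closure {x. \<phi> x \<noteq> 0})
                         \<and> closure {x. \<phi> x \<noteq> 0} \<subseteq> U)"

definition L2_on :: "(real^3) set \<Rightarrow> (real^3 \<Rightarrow> 'b::real_normed_vector) \<Rightarrow> bool" where
  "L2_on U f = (f \<in> borel_measurable (lebesgue_on U) \<and>
                (\<integral>\<^sup>+x\<in>U. ennreal ((norm (f x))\<^sup>2) \<partial>lebesgue) < \<infinity>)"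

text \<open>Convention: G x $ i $ j is the weak derivative of the i-th component w.r.t. x_j.\<close>
definition has_weak_gradient :: "(real^3) set \<Rightarrow> (real^3 \<Rightarrow> real^3) \<Rightarrow> (real^3 \<Rightarrow> real^3^3) \<Rightarrow> bool" where
  "has_weak_gradient U y G = (\<forall>\<phi>. test_function U \<phi> \<longrightarrow> (\<forall>i j.
      integral\<^sup>L (lebesgue_on U) (\<lambda>x. y x $ i * partial \<phi> j x)
      = - integral\<^sup>L (lebesgue_on U) (\<lambda>x. G x $ i $ j * \<phi> x)))"

definition H1 :: "(real^3) set \<Rightarrow> (real^3 \<Rightarrow> real^3) \<Rightarrow> (real^3 \<Rightarrow> real^3^3) \<Rightarrow> bool" where
  "H1 U y G = (L2_on U y \<and> L2_on U G \<and> has_weak_gradient U y G)"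

definition SO3 :: "(real^3^3) set" where
  "SO3 = {R. orthogonal_matrix R \<and> det R = 1}"

definition dist_SO3 :: "real^3^3 \<Rightarrow> real" where
  "dist_SO3 F = infdist F SO3"

text \<open>Scaled gradient: third column divided by h (norm on real^3^3 is the Frobenius norm).\<close>
definition nabla_h :: "real \<Rightarrow> real^3^3 \<Rightarrow> real^3^3" where
  "nabla_h h G = (\<chi> i j. if j = 3 then G $ i $ j / h else G $ i $ j)"

definition sym_pos_def :: "real^3^3 \<Rightarrow> bool" where
  "sym_pos_def M = (transpose M = M \<and> (\<forall>v. v \<noteq> 0 \<longrightarrow> 0 < v \<bullet> (M *v v)))"

definition inv_sqrt :: "real^3^3 \<Rightarrow> real^3^3" where
  "inv_sqrt A = (THE M. sym_pos_def M \<and> M ** M = matrix_inv A)"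

definition outer :: "real^3 \<Rightarrow> real^3 \<Rightarrow> real^3^3" where
  "outer a b = (\<chi> i j. a $ i * b $ j)"

definition r_h :: "real \<Rightarrow> real \<Rightarrow> real" where
  "r_h rbar h = 1 + h * rbar"

definition L_h :: "real \<Rightarrow> real \<Rightarrow> real^3 \<Rightarrow> real^3^3" where
  "L_h rbar h n = (r_h rbar h powr (-1/3)) *\<^sub>R (mat 1 + (r_h rbar h - 1) *\<^sub>R outer n n)"

definition quadratic_form :: "(real^3^3 \<Rightarrow> real) \<Rightarrow> bool" where
  "quadratic_form Q = (\<exists>B. bilinear B \<and> (\<forall>G. Q G = B G G))"

definition assumption_W ::
  "real \<Rightarrow> real \<Rightarrow> (real \<Rightarrow> ereal) \<Rightarrow> (real \<Rightarrow> real^3^3 \<Rightarrow> ennreal) \<Rightarrow> bool" where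
  "assumption_W C_W q_W r_W W =
    (C_W > 0 \<and> q_W > 4 \<and> mono_on {0..} r_W \<and> (r_W \<longlongrightarrow> 0) (at_right 0) \<and>
     (\<lambda>(t, F). W t F) \<in> borel_measurable (restrict_space borel ({-1/2<..<1/2} \<times> UNIV)) \<and>
     (\<forall>t. -1/2 < t \<and> t < 1/2 \<longrightarrow>
        (\<forall>R\<in>SO3. \<forall>F. W t (R ** F) = W t F) \<and>
        (\<forall>F. ennreal (inverse C_W * (dist_SO3 F)\<^sup>2) \<le> W t F) \<and>
        (\<forall>F. (dist_SO3 F)\<^sup>2 \<le> inverse C_W \<longrightarrow> W t F \<le> ennreal (C_W * (dist_SO3 F)\<^sup>2)) \<and>
        (\<exists>Q. quadratic_form Q \<and>
           (\<forall>G. \<bar>enn2ereal (W t (mat 1 + G)) - ereal (Q G)\<bar> \<le> ereal ((norm G)\<^sup>2) * r_W (norm G))) \<and>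
        (\<forall>F. det F > 0 \<longrightarrow>
           ereal (inverse C_W * max (norm F powr q_W) (det F powr (- q_W / 2)) - C_W)
             \<le> enn2ereal (W t F)) \<and>
        (\<forall>F. det F \<le> 0 \<longrightarrow> W t F = \<infinity>)))"

text \<open>Gy, Gn are the (weak) gradients of y on Omega and of n on Omega_top.\<close>
definition energy ::
  "(real^2) set \<Rightarrow> (real \<Rightarrow> real^3^3 \<Rightarrow> ennreal) \<Rightarrow> real \<Rightarrow> real \<Rightarrow> real \<Rightarrow>
   (real^3 \<Rightarrow> real^3^3) \<Rightarrow> (real^3 \<Rightarrow> real^3) \<Rightarrow> (real^3 \<Rightarrow> real^3^3) \<Rightarrow> ennreal" where
  "energy S W epsbar rbar h Gy n Gn =
    (if emeasure lebesgue {x \<in> Omega S. det (nabla_h h (Gy x)) \<le> 0} > 0 then \<infinity>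
     else ennreal (1 / h\<^sup>2) * (\<integral>\<^sup>+x\<in>Omega S - Omega_top S. W (x$3) (nabla_h h (Gy x)) \<partial>lebesgue)
        + ennreal (1 / h\<^sup>2) * (\<integral>\<^sup>+x\<in>Omega_top S.
              W (x$3) (inv_sqrt (L_h rbar h (n x)) ** nabla_h h (Gy x)) \<partial>lebesgue)
        + ennreal (epsbar\<^sup>2) * (\<integral>\<^sup>+x\<in>Omega_top S.
              ennreal ((norm (nabla_h h (Gn x) ** matrix_inv (nabla_h h (Gy x))))\<^sup>2
                       * det (nabla_h h (Gy x))) \<partial>lebesgue))"

definition neg_pow :: "real \<Rightarrow> real \<Rightarrow> ennreal" where
  "neg_pow t a = (if t = 0 then \<infinity> else ennreal (\<bar>t\<bar> powr (- a)))"

end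

theory Submission
  imports Defs
begin


lemma norm_mat_sq: "(norm (A::real^'n^'m))\<^sup>2 = (\<Sum>i\<in>UNIV. \<Sum>j\<in>UNIV. (A$i$j)\<^sup>2)"
  unfolding power2_norm_eq_inner by (simp add: inner_vec_def power2_eq_square)

lemma norm_sq_trace: "(norm (A::real^'n^'m))\<^sup>2 = trace (transpose A ** A)"
  unfolding norm_mat_sq trace_def matrix_matrix_mult_def transpose_def
  apply (simp add: power2_eq_square)
  by (rule sum.swap)

lemma frob: "norm ((A::real^'n^'m) ** (B::real^'k^'n)) \<le> norm A * norm B"
proof -
  have "(norm (A ** B))\<^sup>2 = (\<Sum>i\<in>UNIV. \<Sum>k\<in>UNIV. (\<Sum>j\<in>UNIV. A$i$j * B$j$k)\<^sup>2)"
    by (simp add: norm_mat_sq matrix_matrix_mult_def)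
  also have "\<dots> \<le> (\<Sum>i\<in>UNIV. \<Sum>k\<in>UNIV. (\<Sum>j\<in>UNIV. (A$i$j)\<^sup>2) * (\<Sum>j\<in>UNIV. (B$j$k)\<^sup>2))"
    by (intro sum_mono Cauchy_Schwarz_ineq_sum)
  also have "\<dots> = (\<Sum>i\<in>UNIV. \<Sum>j\<in>UNIV. (A$i$j)\<^sup>2) * (\<Sum>k\<in>UNIV. \<Sum>j\<in>UNIV. (B$j$k)\<^sup>2)"
    by (rule sum_product[symmetric])
  also have "(\<Sum>k\<in>UNIV. \<Sum>j\<in>UNIV. (B$j$k)\<^sup>2) = (\<Sum>j\<in>UNIV. \<Sum>k\<in>UNIV. (B$j$k)\<^sup>2)"
    by (rule sum.swap)
  also have "(\<Sum>i\<in>UNIV. \<Sum>j\<in>UNIV. (A$i$j)\<^sup>2) * \<dots> = (norm A * norm B)\<^sup>2"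
    by (simp add: norm_mat_sq power_mult_distrib)
  finally show ?thesis
    by (meson norm_ge_zero power2_le_imp_le zero_le_mult_iff)
qed

lemma norm_SO3: "R \<in> SO3 \<Longrightarrow> norm R = sqrt 3"
proof -
  assume "R \<in> SO3"
  then have "transpose R ** R = mat 1" by (simp add: SO3_def orthogonal_matrix)
  then have "(norm R)\<^sup>2 = 3" by (simp add: norm_sq_trace trace_I)
  then show ?thesis by (simp add: real_sqrt_unique)
qed

lemma norm_I3: "norm (mat 1 :: real^3^3) = sqrt 3"
proof -
  have "(norm (mat 1 :: real^3^3))\<^sup>2 = 3"
    by (simp add: norm_sq_trace trace_I)
  then show ?thesis by (simp add: real_sqrt_unique)
qed


lemma sym_entry: "transpose (A::'a::semiring_1^'n^'n) = A \<Longrightarrow> A$i$j = A$j$i"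
  by (metis transpose_def vec_lambda_beta)

lemma trace_DMD:
  fixes D M :: "real^'n^'n"
  assumes "transpose D = D"
  shows "trace (D ** (M ** D)) = (\<Sum>i\<in>UNIV. (\<chi> j. D$j$i) \<bullet> (M *v (\<chi> j. D$j$i)))"
proof -
  have s: "D$i$j = D$j$i" for i j using assms by (rule sym_entry)
  show ?thesis
    unfolding trace_def matrix_matrix_mult_def inner_vec_def matrix_vector_mult_def
    apply (simp add: sum_distrib_left sum_distrib_right mult_ac)
    apply (rule sum.cong, simp)
    apply (simp add: s mult_ac)
    done
qed

lemma spd_unique:
  fixes M N :: "real^3^3"
  assumes M: "sym_pos_def M" and N: "sym_pos_def N" and eq: "M ** M = N ** N"
  shows "M = N"
proof -
  define D where "D = M - N"
  have tM: "transpose M = M" and tN: "transpose N = N" using M N by (auto simp: sym_pos_def_def)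
  have tD: "transpose D = D"
    unfolding D_def transpose_def vec_eq_iff
    using sym_entry[OF tM] sym_entry[OF tN] by simp
  have key: "M ** D + D ** N = 0"
  proof -
    have "M ** D + D ** N = M ** M - N ** N"
      unfolding D_def by (simp add: vec_eq_iff matrix_matrix_mult_def sum_subtractf sum.distrib algebra_simps)
    then show ?thesis using eq by simp
  qed
  have "trace (D ** (M ** D)) + trace ((D ** N) ** D) = trace (D ** (M ** D + D ** N))"
    by (simp add: matrix_add_ldistrib trace_add trace_mul_sym[of "D ** N" D] matrix_mul_assoc)
  also have "\<dots> = 0" using key by (simp add: trace_def)
  finally have tr0: "trace (D ** (M ** D)) + trace (D ** (N ** D)) = 0"
    by (simp add: matrix_mul_assoc)
  define v where "v i = (\<chi> j. D$j$i)" for i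
  have pos: "\<And>A i. sym_pos_def A \<Longrightarrow> 0 \<le> v i \<bullet> (A *v v i)"
    by (metis inner_zero_left order_less_imp_le order_refl sym_pos_def_def)
  have tM': "trace (D ** (M ** D)) = (\<Sum>i\<in>UNIV. v i \<bullet> (M *v v i))"
    using trace_DMD[OF tD] by (simp add: v_def)
  have tN': "trace (D ** (N ** D)) = (\<Sum>i\<in>UNIV. v i \<bullet> (N *v v i))"
    using trace_DMD[OF tD] by (simp add: v_def)
  have s1: "0 \<le> (\<Sum>i\<in>UNIV. v i \<bullet> (M *v v i))" by (intro sum_nonneg pos[OF M])
  have s2: "0 \<le> (\<Sum>i\<in>UNIV. v i \<bullet> (N *v v i))" by (intro sum_nonneg pos[OF N])
  have z: "(\<Sum>i\<in>UNIV. v i \<bullet> (M *v v i)) = 0" using tr0 tM' tN' s1 s2 by linarith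
  have "v i = 0" for i
  proof (rule ccontr)
    assume "v i \<noteq> 0"
    then have "0 < v i \<bullet> (M *v v i)" using M by (simp add: sym_pos_def_def)
    moreover have "v i \<bullet> (M *v v i) = 0"
      using z sum_nonneg_eq_0_iff[of UNIV "\<lambda>i. v i \<bullet> (M *v v i)"] pos[OF M] by auto
    ultimately show False by simp
  qed
  then have "D = 0" unfolding v_def by (simp add: vec_eq_iff)
  then show ?thesis unfolding D_def by simp
qed


lemma matrix_add_rdistrib': "((A::real^'n^'m) + B) ** (C::real^'k^'n) = A ** C + B ** C"
  by (simp add: vec_eq_iff matrix_matrix_mult_def sum.distrib algebra_simps)

lemma E_mult:
  fixes K :: "real^'n^'n"
  assumes "K ** K = K"
  shows "(s *\<^sub>R (mat 1 + a *\<^sub>R K)) ** (t *\<^sub>R (mat 1 + b *\<^sub>R K)) = (s*t) *\<^sub>R (mat 1 + (a + b + a*b) *\<^sub>R K)"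
proof -
  have "(mat 1 + a *\<^sub>R K) ** (mat 1 + b *\<^sub>R K) = mat 1 + (a + b + a*b) *\<^sub>R K"
    by (simp add: matrix_add_rdistrib' matrix_add_ldistrib matrix_scalar_ac
         scalar_matrix_assoc[symmetric] assms algebra_simps)
  then show ?thesis
    by (simp add: matrix_scalar_ac scalar_matrix_assoc[symmetric])
qed

lemma outer_idem: "norm (n::real^3) = 1 \<Longrightarrow> outer n n ** outer n n = outer n n"
proof -
  assume "norm n = 1"
  then have "n \<bullet> n = 1" by (simp add: norm_eq_1)
  then have "(\<Sum>j\<in>UNIV. n$j * n$j) = 1" by (simp add: inner_vec_def)
  then show ?thesis
    by (simp add: vec_eq_iff matrix_matrix_mult_def outer_def sum_distrib_left[symmetric]
       sum_distrib_right[symmetric] mult_ac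
       flip: sum_distrib_left)
qed

lemma outer_transpose: "transpose (outer n n) = outer n n"
  by (simp add: transpose_def outer_def vec_eq_iff mult.commute)

lemma outer_quad: "v \<bullet> (outer n n *v v) = (n \<bullet> v)\<^sup>2"
  by (simp add: outer_def matrix_vector_mult_def inner_vec_def power2_eq_square
      sum_distrib_left sum_distrib_right mult_ac)

lemma norm_outer: "norm (n::real^3) = 1 \<Longrightarrow> norm (outer n n) = 1"
proof -
  assume n: "norm n = 1"
  have "(norm (outer n n))\<^sup>2 = (\<Sum>i\<in>UNIV. \<Sum>j\<in>UNIV. (n$i)\<^sup>2 * (n$j)\<^sup>2)"
    unfolding power2_norm_eq_inner by (simp add: inner_vec_def outer_def power2_eq_square mult_ac)
  also have "\<dots> = (\<Sum>i\<in>UNIV. (n$i)\<^sup>2) * (\<Sum>j\<in>UNIV. (n$j)\<^sup>2)"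
    by (simp add: sum_product)
  also have "(\<Sum>i\<in>UNIV. (n$i)\<^sup>2) = 1"
    using n unfolding norm_vec_def L2_set_def by simp
  finally have "(norm (outer n n))\<^sup>2 = 1" by simp
  then show ?thesis using norm_ge_zero[of "outer n n"] power2_eq_1_iff[of "norm (outer n n)"] by linarith
qed


lemma quad_E: "(v::real^3) \<bullet> ((s *\<^sub>R (mat 1 + a *\<^sub>R K)) *v v) = s * (v \<bullet> v + a * (v \<bullet> (K *v v)))"
  by (simp add: inner_vec_def matrix_vector_mult_def mat_def sum_3 algebra_simps)

lemma det_E: "det (s *\<^sub>R (mat 1 + a *\<^sub>R outer (n::real^3) n)) = s^3 * (1 + a * ((n$1)\<^sup>2 + (n$2)\<^sup>2 + (n$3)\<^sup>2))"
  unfolding det_3 by (simp add: mat_def outer_def power2_eq_square power3_eq_cube; algebra)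


lemma pw:
  fixes r :: real assumes r: "r > 0"
  shows "r powr (1/6) * r powr (1/6) = r powr (1/3)"
    and "r powr (1/3) * r powr (-1/3) = 1"
    and "(r powr (-1/2))\<^sup>2 * r = 1"
    and "sqrt r * r powr (-1/2) = 1"
    and "r powr (-1/6) * r powr (1/6) = 1"
    and "(r powr (1/6))^3 * r powr (-1/2) = 1"
proof -
  show "r powr (1/6) * r powr (1/6) = r powr (1/3)" using r by (simp add: powr_add[symmetric])
  show "r powr (1/3) * r powr (-1/3) = 1" using r by (simp add: powr_add[symmetric])
  show "(r powr (-1/2))\<^sup>2 * r = 1" using r
    by (simp add: powr_powr[symmetric] power2_eq_square powr_add[symmetric] flip: powr_realpow)
  show "sqrt r * r powr (-1/2) = 1" using r by (simp add: powr_half_sqrt[symmetric] powr_add[symmetric])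
  show "r powr (-1/6) * r powr (1/6) = 1" using r by (simp add: powr_add[symmetric])
  show "(r powr (1/6))^3 * r powr (-1/2) = 1" using r
    by (simp add: power3_eq_cube powr_add[symmetric])
qed


definition Pm :: "real \<Rightarrow> real^3 \<Rightarrow> real^3^3" where
  "Pm r n = r powr (1/6) *\<^sub>R (mat 1 + (r powr (-1/2) - 1) *\<^sub>R outer n n)"
definition Qm :: "real \<Rightarrow> real^3 \<Rightarrow> real^3^3" where
  "Qm r n = r powr (-1/6) *\<^sub>R (mat 1 + (sqrt r - 1) *\<^sub>R outer n n)"

lemma E_one: "s = 1 \<Longrightarrow> c = 0 \<Longrightarrow> s *\<^sub>R (mat 1 + c *\<^sub>R (K::real^3^3)) = mat 1"
  by simp

lemma PQ:
  assumes r: "r_h rbar h > 0" and n: "norm n = 1"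
  defines "r \<equiv> r_h rbar h"
  shows "inv_sqrt (L_h rbar h n) = Pm r n"
    and "Qm r n ** Pm r n = mat 1"
    and "det (Pm r n) = 1"
proof -
  have r0: "r > 0" using r by (simp add: r_def)
  note pw = pw[OF r0]
  have KK: "outer n n ** outer n n = outer n n" by (rule outer_idem[OF n])
  have L: "L_h rbar h n = r powr (-1/3) *\<^sub>R (mat 1 + (r - 1) *\<^sub>R outer n n)"
    by (simp add: L_h_def r_def)
  define a where "a = r powr (-1/2) - 1"
  have PP: "Pm r n ** Pm r n = (r powr (1/3)) *\<^sub>R (mat 1 + (a + a + a*a) *\<^sub>R outer n n)"
    unfolding Pm_def E_mult[OF KK] a_def pw(1) ..
  have c0: "(a + a + a*a) + (r - 1) + (a + a + a*a) * (r - 1) = 0"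
  proof -
    have "(a + a + a*a) + (r - 1) + (a + a + a*a) * (r - 1) = (1 + a)^2 * r - 1"
      by (simp add: algebra_simps power2_eq_square)
    also have "\<dots> = 0" using pw(3) by (simp add: a_def)
    finally show ?thesis .
  qed
  have c0': "(r - 1) + (a + a + a*a) + (r - 1) * (a + a + a*a) = 0"
    using c0 by (simp add: algebra_simps)
  have inv1: "(Pm r n ** Pm r n) ** L_h rbar h n = mat 1"
    unfolding PP L E_mult[OF KK] using pw(2) c0 by simp
  have inv2: "L_h rbar h n ** (Pm r n ** Pm r n) = mat 1"
    unfolding PP L E_mult[OF KK] using pw(2) c0' by (simp add: mult.commute)
  have mi: "matrix_inv (L_h rbar h n) = Pm r n ** Pm r n"
  proof -
    let ?L = "L_h rbar h n"
    have ex: "\<exists>A'. ?L ** A' = mat 1 \<and> A' ** ?L = mat 1" using inv1 inv2 by blast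
    have s: "?L ** matrix_inv ?L = mat 1 \<and> matrix_inv ?L ** ?L = mat 1"
      unfolding matrix_inv_def by (rule someI_ex[OF ex])
    have "matrix_inv ?L = ((Pm r n ** Pm r n) ** ?L) ** matrix_inv ?L"
      using inv1 by simp
    also have "\<dots> = (Pm r n ** Pm r n) ** (?L ** matrix_inv ?L)" by (simp add: matrix_mul_assoc)
    also have "\<dots> = Pm r n ** Pm r n" using s by simp
    finally show ?thesis .
  qed
  have spd: "sym_pos_def (Pm r n)"
    unfolding sym_pos_def_def
  proof (intro conjI allI impI)
    show "transpose (Pm r n) = Pm r n"
      unfolding Pm_def
      by (simp add: transpose_scalar outer_transpose vec_eq_iff transpose_def mat_def outer_def mult.commute)
  next
    fix v :: "real^3" assume v: "v \<noteq> 0"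
    have cs: "(n \<bullet> v)\<^sup>2 \<le> v \<bullet> v"
    proof -
      have "\<bar>n \<bullet> v\<bar> \<le> norm n * norm v" by (rule Cauchy_Schwarz_ineq2)
      then have "(n \<bullet> v)\<^sup>2 \<le> (norm v)\<^sup>2" using n by (metis abs_ge_zero mult_1 power2_abs power_mono)
      then show ?thesis by (simp add: power2_norm_eq_inner)
    qed
    have vv: "v \<bullet> v > 0" using v by simp
    have a1: "a > -1" unfolding a_def using r0 by simp
    have "0 < v \<bullet> v + a * (n \<bullet> v)\<^sup>2"
    proof (cases "a \<ge> 0")
      case True then show ?thesis using vv by (simp add: add_pos_nonneg)
    next
      case False
      then have "a * (n \<bullet> v)\<^sup>2 \<ge> a * (v \<bullet> v)" using cs by (simp add: mult_left_mono_neg)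
      moreover have "0 < (1 + a) * (v \<bullet> v)" using a1 vv by simp
      ultimately show ?thesis by (simp add: algebra_simps)
    qed
    then show "0 < v \<bullet> (Pm r n *v v)"
      unfolding Pm_def quad_E outer_quad using r0 by (simp add: a_def)
  qed
  show "inv_sqrt (L_h rbar h n) = Pm r n"
    unfolding inv_sqrt_def mi
  proof (rule the_equality)
    show "sym_pos_def (Pm r n) \<and> Pm r n ** Pm r n = Pm r n ** Pm r n" using spd by simp
  next
    fix M assume "sym_pos_def M \<and> M ** M = Pm r n ** Pm r n"
    then show "M = Pm r n" using spd_unique spd by blast
  qed
  show "Qm r n ** Pm r n = mat 1"
  proof -
    have c: "(sqrt r - 1) + (r powr (-1/2) - 1) + (sqrt r - 1) * (r powr (-1/2) - 1) = 0"
      using pw(4) by (simp add: algebra_simps)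
    show ?thesis unfolding Qm_def Pm_def E_mult[OF KK] using pw(5) c by simp
  qed
  show "det (Pm r n) = 1"
  proof -
    have "(n$1)\<^sup>2 + (n$2)\<^sup>2 + (n$3)\<^sup>2 = 1"
      using n unfolding norm_vec_def L2_set_def by (simp add: sum_3)
    then show ?thesis unfolding Pm_def det_E using pw(6) by simp
  qed
qed


lemma scal:
  fixes r :: real assumes r1: "1/2 \<le> r" and r2: "r \<le> 3/2"
  shows "\<bar>r powr (-1/6) - 1\<bar> \<le> 2 * \<bar>r - 1\<bar>" and "r powr (-1/6) \<le> 2"
    and "\<bar>sqrt r - 1\<bar> \<le> \<bar>r - 1\<bar>"
proof -
  have r0: "r > 0" using r1 by simp
  have inv: "r powr (-1) = 1 / r" using r0 by (simp add: powr_minus_divide)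
  have A: "\<bar>r powr (-1/6) - 1\<bar> \<le> 2 * \<bar>r - 1\<bar>"
  proof (cases "r \<ge> 1")
    case True
    have u: "r powr (-1/6) \<le> 1" using True powr_mono[of "-1/6" 0 r] by simp
    have l: "r powr (-1) \<le> r powr (-1/6)" using True powr_mono[of "-1" "-1/6" r] by simp
    have "1 - 1/r = (r - 1) / r" using r0 by (simp add: field_simps)
    also have "\<dots> \<le> r - 1" using True mult_left_mono[of 1 r "r - 1"] by (simp add: divide_le_eq)
    finally have "1 - r powr (-1) \<le> r - 1" using inv by simp
    then have "1 - r powr (-1/6) \<le> r - 1" using l by linarith
    then show ?thesis using u True by (simp add: abs_if)
  next
    case False
    have u: "1 \<le> r powr (-1/6)" using False r0 powr_mono'[of "-1/6" 0 r] by simp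
    have l: "r powr (-1/6) \<le> r powr (-1)" using False r0 powr_mono'[of "-1" "-1/6" r] by simp
    have "1/r - 1 = (1 - r) / r" using r0 by (simp add: field_simps)
    also have "\<dots> \<le> (1 - r) / (1/2)" using False r1 by (intro divide_left_mono) auto
    finally have "r powr (-1) - 1 \<le> 2 * (1 - r)" using inv by simp
    then have "r powr (-1/6) - 1 \<le> 2 * (1 - r)" using l by linarith
    then show ?thesis using u False by (simp add: abs_if)
  qed
  show "\<bar>r powr (-1/6) - 1\<bar> \<le> 2 * \<bar>r - 1\<bar>" by (rule A)
  show "r powr (-1/6) \<le> 2"
  proof -
    have a: "r powr (-1/6) - 1 \<le> 2 * \<bar>r - 1\<bar>" using A abs_le_D1 order_trans by blast
    have "\<bar>r - 1\<bar> \<le> 1/2" using r1 r2 by (simp add: abs_if)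
    then have "2 * \<bar>r - 1\<bar> \<le> 1" by simp
    then have "r powr (-1/6) - 1 \<le> 1" using a by (rule order_trans[rotated])
    then show ?thesis by simp
  qed
  have e: "\<bar>sqrt r - 1\<bar> * (sqrt r + 1) = \<bar>r - 1\<bar>"
  proof -
    have "(sqrt r - 1) * (sqrt r + 1) = r - 1" using r0 by (simp add: algebra_simps)
    moreover have "\<bar>sqrt r + 1\<bar> = sqrt r + 1" using real_sqrt_ge_zero[of r] r0 by (intro abs_of_nonneg) linarith
    ultimately show ?thesis by (metis abs_mult)
  qed
  have "\<bar>sqrt r - 1\<bar> \<le> \<bar>sqrt r - 1\<bar> * (sqrt r + 1)"
    using mult_left_mono[of 1 "sqrt r + 1" "\<bar>sqrt r - 1\<bar>"] r0 by simp
  then show "\<bar>sqrt r - 1\<bar> \<le> \<bar>r - 1\<bar>" using e by simp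
qed

lemma sqrt3: "sqrt 3 \<le> (2::real)"
  by (rule real_le_lsqrt) auto

lemma Qbounds:
  fixes r :: real and n :: "real^3"
  assumes r1: "1/2 \<le> r" and r2: "r \<le> 3/2" and n: "norm n = 1"
    and s1: "\<bar>s - 1\<bar> \<le> 2 * \<bar>r - 1\<bar>" and s2: "s \<le> 2" and s0: "0 \<le> s"
    and b: "\<bar>b\<bar> \<le> \<bar>r - 1\<bar>"
  shows "norm (s *\<^sub>R (mat 1 + b *\<^sub>R outer n n)) \<le> 6"
    and "norm (s *\<^sub>R (mat 1 + b *\<^sub>R outer n n) - mat 1) \<le> 6 * \<bar>r - 1\<bar>"
proof -
  have rr: "\<bar>r - 1\<bar> \<le> 1/2" using r1 r2 by (simp add: abs_if)
  have nO: "norm (outer n n) = 1" by (rule norm_outer[OF n])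
  have "norm (s *\<^sub>R (mat 1 + b *\<^sub>R outer n n)) = s * norm (mat 1 + b *\<^sub>R outer n n)"
    using s0 by simp
  also have "\<dots> \<le> s * (norm (mat 1 :: real^3^3) + norm (b *\<^sub>R outer n n))"
    using s0 norm_triangle_ineq[of "mat 1 :: real^3^3" "b *\<^sub>R outer n n"] by (intro mult_left_mono) auto
  also have "\<dots> = s * (sqrt 3 + \<bar>b\<bar>)" using nO by (simp add: norm_I3)
  also have "\<dots> \<le> 2 * (2 + 1/2)"
  proof -
    have "\<bar>b\<bar> \<le> 1/2" using b rr by linarith
    then have "sqrt 3 + \<bar>b\<bar> \<le> 2 + 1/2" using sqrt3 by linarith
    then show ?thesis using s0 s2 by (intro mult_mono) auto
  qed
  finally show "norm (s *\<^sub>R (mat 1 + b *\<^sub>R outer n n)) \<le> 6" by simp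
  have e: "s *\<^sub>R (mat 1 + b *\<^sub>R outer n n) - mat 1 = (s - 1) *\<^sub>R (mat 1 :: real^3^3) + (s * b) *\<^sub>R outer n n"
    by (simp add: algebra_simps)
  have "norm (s *\<^sub>R (mat 1 + b *\<^sub>R outer n n) - mat 1) \<le> norm ((s - 1) *\<^sub>R (mat 1 :: real^3^3)) + norm ((s * b) *\<^sub>R outer n n)"
    unfolding e by (rule norm_triangle_ineq)
  also have "\<dots> = \<bar>s - 1\<bar> * sqrt 3 + s * \<bar>b\<bar>" using nO s0 by (simp add: norm_I3 abs_mult)
  also have "\<dots> \<le> (2 * \<bar>r - 1\<bar>) * 2 + 2 * \<bar>r - 1\<bar>"
    by (intro add_mono mult_mono) (use s1 s2 s0 b sqrt3 in auto)
  finally show "norm (s *\<^sub>R (mat 1 + b *\<^sub>R outer n n) - mat 1) \<le> 6 * \<bar>r - 1\<bar>" by simp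
qed



lemma matrix_sub_ldistrib': "(A::real^'n^'m) ** (B - C) = A ** B - A ** C"
  by (simp add: vec_eq_iff matrix_matrix_mult_def sum_subtractf algebra_simps)
lemma matrix_sub_rdistrib': "((A::real^'n^'m) - B) ** C = A ** C - B ** C"
  by (simp add: vec_eq_iff matrix_matrix_mult_def sum_subtractf algebra_simps)

lemma SO3_ne: "mat 1 \<in> SO3"
  by (simp add: SO3_def orthogonal_matrix_id)

lemma dist_bound:
  fixes F P Q :: "real^3^3"
  assumes QP: "Q ** P = mat 1" and nQ: "norm Q \<le> 6" and nQI: "norm (Q - mat 1) \<le> e"
  shows "dist_SO3 F \<le> 6 * dist_SO3 (P ** F) + 2 * e"
proof -
  have e0: "0 \<le> e" using nQI norm_ge_zero order_trans by blast
  have ne: "SO3 \<noteq> {}" using SO3_ne by blast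
  have key: "(dist_SO3 F - 2 * e) / 6 \<le> dist (P ** F) R" if R: "R \<in> SO3" for R
  proof -
    have eq: "F - R = Q ** (P ** F - R) + (Q - mat 1) ** R"
      by (simp add: matrix_sub_ldistrib' matrix_sub_rdistrib' matrix_mul_assoc QP)
    have "dist_SO3 F \<le> dist F R" unfolding dist_SO3_def by (rule infdist_le[OF R])
    also have "dist F R = norm (Q ** (P ** F - R) + (Q - mat 1) ** R)"
      by (simp add: dist_norm eq[symmetric])
    also have "\<dots> \<le> norm (Q ** (P ** F - R)) + norm ((Q - mat 1) ** R)"
      by (rule norm_triangle_ineq)
    also have "\<dots> \<le> norm Q * norm (P ** F - R) + norm (Q - mat 1) * norm R"
      by (intro add_mono frob)
    also have "\<dots> \<le> 6 * norm (P ** F - R) + e * 2"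
      using norm_SO3[OF R] sqrt3 nQ nQI e0 by (intro add_mono mult_mono) auto
    finally show ?thesis by (simp add: dist_norm)
  qed
  have "(dist_SO3 F - 2 * e) / 6 \<le> dist_SO3 (P ** F)"
  proof -
    have "infdist (P ** F) SO3 = (INF R\<in>SO3. dist (P ** F) R)" by (rule infdist_notempty[OF ne])
    moreover have "(dist_SO3 F - 2 * e) / 6 \<le> (INF R\<in>SO3. dist (P ** F) R)"
      by (rule cINF_greatest[OF ne]) (rule key)
    ultimately show ?thesis by (simp add: dist_SO3_def)
  qed
  then show ?thesis by simp
qed

lemma dist_bound_sq:
  fixes F P Q :: "real^3^3"
  assumes QP: "Q ** P = mat 1" and nQ: "norm Q \<le> 6" and nQI: "norm (Q - mat 1) \<le> e"
  shows "(dist_SO3 F)\<^sup>2 \<le> 72 * (dist_SO3 (P ** F))\<^sup>2 + 8 * e\<^sup>2"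
proof -
  have d: "dist_SO3 F \<le> 6 * dist_SO3 (P ** F) + 2 * e" by (rule dist_bound[OF assms])
  have "0 \<le> dist_SO3 F" by (simp add: dist_SO3_def infdist_nonneg)
  then have "(dist_SO3 F)\<^sup>2 \<le> (6 * dist_SO3 (P ** F) + 2 * e)\<^sup>2" using d by (intro power_mono) auto
  also have "\<dots> \<le> 72 * (dist_SO3 (P ** F))\<^sup>2 + 8 * e\<^sup>2"
  proof -
    have "(6 * dist_SO3 (P ** F) + 2 * e)\<^sup>2 + (6 * dist_SO3 (P ** F) - 2 * e)\<^sup>2 = 72 * (dist_SO3 (P ** F))\<^sup>2 + 8 * e\<^sup>2"
      by (simp add: power2_eq_square algebra_simps)
    then show ?thesis using zero_le_power2[of "6 * dist_SO3 (P ** F) - 2 * e"] by linarith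
  qed
  finally show ?thesis .
qed


lemma W_facts:
  assumes W: "assumption_W C q rW W" and t: "-1/2 < t" "t < 1/2"
  shows "ennreal ((dist_SO3 F)\<^sup>2) \<le> ennreal C * W t F"
    and "det F > 0 \<Longrightarrow> ennreal (max (norm F powr q) (det F powr (- q / 2))) \<le> ennreal C * (W t F + ennreal C)"
    and "det F \<le> 0 \<Longrightarrow> W t F = \<infinity>"
    and "C > 0" and "q > 4"
proof -
  note Wd = W[unfolded assumption_W_def]
  have C: "C > 0" using Wd by (rule conjunct1)
  show "C > 0" by (rule C)
  show "q > 4" using Wd[THEN conjunct2] by (rule conjunct1)
  note Wt = Wd[THEN conjunct2, THEN conjunct2, THEN conjunct2, THEN conjunct2, THEN conjunct2,
     THEN spec[of _ t], THEN mp, OF conjI[OF t]]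
  have lb: "ennreal (inverse C * (dist_SO3 F)\<^sup>2) \<le> W t F"
    using Wt[THEN conjunct2, THEN conjunct1] by (rule spec)
  have "ennreal ((dist_SO3 F)\<^sup>2) = ennreal C * ennreal (inverse C * (dist_SO3 F)\<^sup>2)"
  proof -
    have "ennreal C * ennreal (inverse C * (dist_SO3 F)\<^sup>2) = ennreal (C * (inverse C * (dist_SO3 F)\<^sup>2))"
      using C by (intro ennreal_mult[symmetric]) auto
    then show ?thesis using C by simp
  qed
  also have "\<dots> \<le> ennreal C * W t F" using lb by (rule mult_left_mono) simp
  finally show "ennreal ((dist_SO3 F)\<^sup>2) \<le> ennreal C * W t F" .
  show "det F \<le> 0 \<Longrightarrow> W t F = \<infinity>"
    using Wt[THEN conjunct2, THEN conjunct2, THEN conjunct2, THEN conjunct2, THEN conjunct2, rule_format] by blast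
  assume d: "det F > 0"
  define m where "m = max (norm F powr q) (det F powr (- q / 2))"
  have m0: "0 \<le> m" unfolding m_def by (simp add: le_max_iff_disj)
  have e: "ereal (inverse C * m - C) \<le> enn2ereal (W t F)"
    using Wt[THEN conjunct2, THEN conjunct2, THEN conjunct2, THEN conjunct2, THEN conjunct1, rule_format, OF d]
    unfolding m_def .
  show "ennreal m \<le> ennreal C * (W t F + ennreal C)"
  proof (cases "W t F = \<infinity>")
    case True
    then show ?thesis using C by (simp add: ennreal_mult_top)
  next
    case False
    then obtain w where w: "W t F = ennreal w" "0 \<le> w" by (cases "W t F") auto
    have "inverse C * m - C \<le> w" using e w by simp
    then have "m \<le> C * (w + C)" using C by (simp add: field_simps)
    then have "ennreal m \<le> ennreal (C * (w + C))" by (rule ennreal_leI)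
    also have "\<dots> = ennreal C * (W t F + ennreal C)"
      using C w by (simp add: ennreal_mult)
    finally show ?thesis .
  qed
qed


lemma pw2:
  assumes W: "assumption_W C q rW W" and t: "-1/2 < t" "t < 1/2"
    and dG: "det G > 0" and dF: "det F = det G" and nF: "norm F \<le> 6 * norm G"
  shows "ennreal (norm F powr q) + neg_pow (det F) (q/2) \<le> ennreal ((6 powr q + 1) * C) * (W t G + ennreal C)"
proof -
  note Wf = W_facts[OF W t]
  have C: "C > 0" and q: "q > 4" using Wf by auto
  define m where "m = max (norm G powr q) (det G powr (- q / 2))"
  have mW: "ennreal m \<le> ennreal C * (W t G + ennreal C)" unfolding m_def by (rule Wf(2)[OF dG])
  have m0: "0 \<le> m" unfolding m_def by (simp add: le_max_iff_disj)
  have "norm F powr q \<le> (6 * norm G) powr q" using nF q by (intro powr_mono2) auto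
  also have "\<dots> = 6 powr q * norm G powr q" by (simp add: powr_mult)
  also have "\<dots> \<le> 6 powr q * m" unfolding m_def by (intro mult_left_mono) auto
  finally have a: "norm F powr q \<le> 6 powr q * m" .
  have b: "neg_pow (det F) (q/2) = ennreal (det G powr (- q / 2))"
    using dF dG by (simp add: neg_pow_def)
  have b': "det G powr (- q / 2) \<le> m" unfolding m_def by simp
  have "ennreal (norm F powr q) + neg_pow (det F) (q/2) \<le> ennreal (6 powr q * m) + ennreal m"
    unfolding b using a b' by (intro add_mono ennreal_leI)
  also have "\<dots> = ennreal (6 powr q + 1) * ennreal m"
    using m0 by (simp add: ennreal_mult[symmetric] algebra_simps)
  also have "\<dots> \<le> ennreal (6 powr q + 1) * (ennreal C * (W t G + ennreal C))"
    using mW by (rule mult_left_mono) simp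
  also have "\<dots> = ennreal ((6 powr q + 1) * C) * (W t G + ennreal C)"
    using C by (simp add: ennreal_mult mult.assoc)
  finally show ?thesis .
qed


lemma real_pw4:
  fixes a b s g p q :: real
  assumes p: "1 < p" "p < 2" and q: "q = 4 * p / (2 - p)"
    and s: "s > 0" and a: "a \<ge> 0" and b: "b \<ge> 0" and g: "0 \<le> g" "g \<le> a * b"
  shows "g powr p \<le> a\<^sup>2 * s + (b powr q + s powr (- q / 2))"
proof (cases "a = 0 \<or> b = 0")
  case True
  then have "g = 0" using g by auto
  then show ?thesis using p s by (simp add: add_nonneg_nonneg)
next
  case False
  then have a0: "a > 0" and b0: "b > 0" using a b by auto
  have q2: "q * (2 - p) = 4 * p" using q p by (simp add: field_simps)
  define A where "A = a\<^sup>2 * s"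
  define B where "B = b powr (q/2) * s powr (- q / 4)"
  have A0: "A > 0" using a0 s by (simp add: A_def)
  have B0: "B > 0" using b0 s by (simp add: B_def)
  have "A powr (p/2) = a powr p * s powr (p/2)"
  proof -
    have "a\<^sup>2 = a powr 2" using a0 by (simp add: powr_numeral)
    then have "A powr (p/2) = (a powr 2) powr (p/2) * s powr (p/2)"
      using a0 s by (simp add: A_def powr_mult)
    also have "(a powr 2) powr (p/2) = a powr p" by (simp add: powr_powr)
    finally show ?thesis .
  qed
  moreover have "B powr (1 - p/2) = b powr p * s powr (- p/2)"
  proof -
    have e1: "q * (1 - p / 2) / 2 = p" using q2 by (simp add: field_simps)
    have e2: "- (q * (1 - p / 2) / 4) = - (p / 2)" using q2 by (simp add: field_simps)
    show ?thesis using b0 s by (simp add: B_def powr_mult powr_powr e1 e2)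
  qed
  ultimately have "A powr (p/2) * B powr (1 - p/2) = (a * b) powr p"
    using a0 b0 s by (simp add: powr_mult powr_add[symmetric] mult_ac)
  moreover have "g powr p \<le> (a * b) powr p" using g p by (intro powr_mono2) auto
  moreover have "A powr (p/2) * B powr (1 - p/2) \<le> (p/2) * A + (1 - p/2) * B"
    using p A0 B0 by (intro Youngs_inequality_0) auto
  moreover have "(p/2) * A + (1 - p/2) * B \<le> A + B"
  proof -
    have "(p/2) * A \<le> 1 * A" using p A0 by (intro mult_right_mono) auto
    moreover have "(1 - p/2) * B \<le> 1 * B" using p B0 by (intro mult_right_mono) auto
    ultimately show ?thesis by simp
  qed
  moreover have "B \<le> b powr q + s powr (- q / 2)"
  proof -
    have "(b powr q) powr (1/2) * (s powr (- q / 2)) powr (1/2) \<le> (1/2) * b powr q + (1/2) * s powr (- q / 2)"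
      using b0 s by (intro Youngs_inequality_0) auto
    moreover have "(b powr q) powr (1/2) * (s powr (- q / 2)) powr (1/2) = B"
      using b0 s by (simp add: B_def powr_powr)
    moreover have "0 \<le> b powr q" "0 \<le> s powr (- q / 2)" by auto
    ultimately show ?thesis by linarith
  qed
  ultimately show ?thesis unfolding A_def by linarith
qed
lemma matrix_inv_left: "det (F::real^3^3) \<noteq> 0 \<Longrightarrow> matrix_inv F ** F = mat 1"
proof -
  assume "det F \<noteq> 0"
  then have "invertible F" by (simp add: invertible_det_nz)
  then have "\<exists>A'. F ** A' = mat 1 \<and> A' ** F = mat 1" by (simp add: invertible_def)
  then have "F ** matrix_inv F = mat 1 \<and> matrix_inv F ** F = mat 1"
    unfolding matrix_inv_def by (rule someI_ex)
  then show ?thesis by simp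
qed

lemma pw4:
  fixes F G :: "real^3^3"
  assumes p: "1 < p" "p < 2" and q: "q = 4 * p / (2 - p)" and d: "det F > 0"
  shows "ennreal (norm G powr p) \<le> ennreal ((norm (G ** matrix_inv F))\<^sup>2 * \<bar>det F\<bar>) + (ennreal (norm F powr q) + neg_pow (det F) (q/2))"
proof -
  have "G = (G ** matrix_inv F) ** F"
    using matrix_inv_left[of F] d by (simp add: matrix_mul_assoc[symmetric])
  then have g: "norm G \<le> norm (G ** matrix_inv F) * norm F" by (metis frob)
  have r: "norm G powr p \<le> (norm (G ** matrix_inv F))\<^sup>2 * det F + (norm F powr q + det F powr (- q / 2))"
    by (rule real_pw4[OF p q d]) (use g in auto)
  have "neg_pow (det F) (q/2) = ennreal (det F powr (- q / 2))"
    using d by (simp add: neg_pow_def)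
  moreover have "\<bar>det F\<bar> = det F" using d by simp
  ultimately show ?thesis using r d
    by (simp add: ennreal_plus[symmetric] del: ennreal_plus)
qed


lemma neg_pow_meas: "(\<lambda>t. neg_pow t a) \<in> borel_measurable borel"
  unfolding neg_pow_def by measurable

lemma powr_norm_meas: "(\<lambda>F::real^3^3. ennreal (norm F powr q)) \<in> borel_measurable borel"
  by measurable

lemma det_cont: "continuous_on UNIV (\<lambda>F::real^3^3. det F)"
  unfolding det_3 by (intro continuous_intros)

lemma det_meas: "(\<lambda>F::real^3^3. det F) \<in> borel_measurable borel"
  by (intro borel_measurable_continuous_onI det_cont)

lemma dist_meas: "(\<lambda>F::real^3^3. ennreal ((dist_SO3 F)\<^sup>2)) \<in> borel_measurable borel"
  unfolding dist_SO3_def by (intro measurable_compose[OF borel_measurable_continuous_onI[OF continuous_on_infdist[OF continuous_on_id]]]) measurable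

lemma linear_nabla: "linear (nabla_h h)"
  by (rule linearI) (simp_all add: nabla_h_def vec_eq_iff add_divide_distrib)

lemma nabla_meas: "nabla_h h \<in> borel_measurable borel"
  by (intro borel_measurable_continuous_onI linear_continuous_on linear_conv_bounded_linear[THEN iffD1] linear_nabla)



lemma proj_eq: "(vector [x$1, x$2] :: real^2) = (\<chi> i. if i = 1 then (x::real^3)$1 else x$2)"
  by (simp add: vec_eq_iff forall_2)

lemma proj_cont: "continuous_on UNIV (\<lambda>x::real^3. vector [x$1, x$2] :: real^2)"
  unfolding proj_eq
proof (intro continuous_on_vec_lambda)
  fix i :: 2
  show "continuous_on UNIV (\<lambda>x::real^3. if i = 1 then x$1 else x$2)"
    by (cases "i = 1") (auto intro: continuous_on_component)
qed

lemma Omega_eq: "Omega S = (\<lambda>x::real^3. vector [x$1, x$2] :: real^2) -` S \<inter> {x. -1/2 < x$3} \<inter> {x. x$3 < 1/2}"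
  by (auto simp: Omega_def)
lemma Omega_top_eq: "Omega_top S = (\<lambda>x::real^3. vector [x$1, x$2] :: real^2) -` S \<inter> {x. 0 < x$3} \<inter> {x. x$3 < 1/2}"
  by (auto simp: Omega_top_def)

lemma open_Omega: "open S \<Longrightarrow> open (Omega S)"
  unfolding Omega_eq
  by (intro open_Int open_vimage proj_cont open_halfspace_component_lt_cart open_halfspace_component_gt_cart)
lemma open_Omega_top: "open S \<Longrightarrow> open (Omega_top S)"
  unfolding Omega_top_eq
  by (intro open_Int open_vimage proj_cont open_halfspace_component_lt_cart open_halfspace_component_gt_cart)

lemma open_leb: "open A \<Longrightarrow> A \<in> sets lebesgue"
  by (simp add: borel_open sets_completionI_sets)  

lemma Omega_top_sub: "Omega_top S \<subseteq> Omega S"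
  by (auto simp: Omega_def Omega_top_def)

lemma bounded_Omega: assumes "bounded S" shows "bounded (Omega S)"
proof -
  obtain B where B: "\<And>z. z \<in> S \<Longrightarrow> norm z \<le> B" using assms bounded_iff by blast
  have "norm x \<le> B + 1" if x: "x \<in> Omega S" for x :: "real^3"
  proof -
    have z: "vector [x$1, x$2] \<in> S" and x3: "\<bar>x$3\<bar> \<le> 1" using x by (auto simp: Omega_def)
    have "(norm x)\<^sup>2 = (x$1)\<^sup>2 + (x$2)\<^sup>2 + (x$3)\<^sup>2"
      unfolding norm_vec_def L2_set_def by (simp add: sum_3)
    moreover have "(norm (vector [x$1, x$2] :: real^2))\<^sup>2 = (x$1)\<^sup>2 + (x$2)\<^sup>2"
      unfolding norm_vec_def L2_set_def by (simp add: sum_2)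
    moreover have "(x$3)\<^sup>2 \<le> 1" using x3 abs_le_square_iff[of "x$3" 1] by simp
    ultimately have "(norm x)\<^sup>2 \<le> (norm (vector [x$1, x$2] :: real^2))\<^sup>2 + 1" by simp
    also have "\<dots> \<le> (norm (vector [x$1, x$2] :: real^2) + 1)\<^sup>2"
      by (simp add: power2_eq_square algebra_simps)
    finally have "norm x \<le> norm (vector [x$1, x$2] :: real^2) + 1"
      by (rule power2_le_imp_le) simp
    then show ?thesis using B[OF z] by simp
  qed
  then show ?thesis unfolding bounded_iff by blast
qed

lemma fin_Omega: assumes "bounded S" "open S" shows "emeasure lebesgue (Omega S) < \<infinity>"
  using bounded_set_imp_lmeasurable[OF bounded_Omega[OF assms(1)] open_leb[OF open_Omega[OF assms(2)]]]
  unfolding fmeasurable_def by (simp del: emeasure_completion)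


lemma borel_to_lebon: "f \<in> borel_measurable borel \<Longrightarrow> f \<in> borel_measurable (lebesgue_on S)"
  by (intro measurable_restrict_space1 measurable_completion) simp

lemma Wcomp:
  fixes Psi :: "real^3 \<Rightarrow> real^3^3"
  assumes W: "assumption_W C q rW W" and A: "A \<subseteq> Omega S"
    and Psi: "Psi \<in> borel_measurable (lebesgue_on A)"
  shows "(\<lambda>x. W (x$3) (Psi x)) \<in> borel_measurable (lebesgue_on A)"
proof -
  have Wm: "(\<lambda>(t, F). W t F) \<in> borel_measurable (restrict_space borel ({-1/2<..<1/2} \<times> UNIV))"
    using W unfolding assumption_W_def by blast
  have x3: "(\<lambda>x::real^3. x$3) \<in> borel_measurable (lebesgue_on A)"
    by (intro borel_to_lebon borel_measurable_continuous_onI continuous_on_component continuous_on_id)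
  have g: "(\<lambda>x. (x$3, Psi x)) \<in> measurable (lebesgue_on A) borel"
    unfolding borel_prod[symmetric] by (rule measurable_Pair[OF x3 Psi])
  have g': "(\<lambda>x. (x$3, Psi x)) \<in> measurable (lebesgue_on A) (restrict_space borel ({-1/2<..<1/2} \<times> UNIV))"
    by (rule measurable_restrict_space2[OF _ g]) (use A in \<open>auto simp: Omega_def\<close>)
  show ?thesis using measurable_compose[OF g' Wm] by simp
qed


lemma nn_integral_add_le:
  assumes g: "g \<in> borel_measurable M"
  shows "(\<integral>\<^sup>+x. f x + g x \<partial>M) \<le> integral\<^sup>N M f + integral\<^sup>N M g"
  unfolding nn_integral_def[of M "\<lambda>x. f x + g x"]
proof (rule SUP_least)
  fix s assume "s \<in> {s. simple_function M s \<and> s \<le> (\<lambda>x. f x + g x)}"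
  then have s: "simple_function M s" and le: "\<And>x. s x \<le> f x + g x" by (auto simp: le_fun_def)
  have sm: "s \<in> borel_measurable M" by (rule borel_measurable_simple_function[OF s])
  define u where "u x = (if g x = top then 0 else s x - g x)" for x
  have um: "u \<in> borel_measurable M" unfolding u_def using sm g by measurable
  have su: "s x \<le> u x + g x" for x
    by (cases "g x = top") (auto simp: u_def diff_add_self_ennreal)
  have uf: "u x \<le> f x" for x
    using le[of x] by (auto simp: u_def ennreal_minus_le_iff add.commute)
  have "integral\<^sup>S M s = integral\<^sup>N M s" by (rule nn_integral_eq_simple_integral[symmetric, OF s])
  also have "\<dots> \<le> (\<integral>\<^sup>+x. u x + g x \<partial>M)" by (intro nn_integral_mono su)
  also have "\<dots> = integral\<^sup>N M u + integral\<^sup>N M g" by (rule nn_integral_add[OF um g])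
  also have "\<dots> \<le> integral\<^sup>N M f + integral\<^sup>N M g" by (intro add_mono nn_integral_mono uf) simp
  finally show "integral\<^sup>S M s \<le> integral\<^sup>N M f + integral\<^sup>N M g" .
qed

lemma mult_cont: "continuous_on UNIV (\<lambda>z::(real^3^3) \<times> (real^3^3). fst z ** snd z)"
  unfolding matrix_matrix_mult_def by (intro continuous_intros)

lemma mult_meas:
  fixes A B :: "'a \<Rightarrow> real^3^3"
  assumes "A \<in> borel_measurable M" "B \<in> borel_measurable M"
  shows "(\<lambda>x. A x ** B x) \<in> borel_measurable M"
proof -
  have "(\<lambda>x. (A x, B x)) \<in> borel_measurable M"
    unfolding borel_prod[symmetric] by (rule measurable_Pair[OF assms])
  from measurable_compose[OF this borel_measurable_continuous_onI[OF mult_cont]] show ?thesis by simp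
qed

lemma outer_cont: "continuous_on UNIV (\<lambda>n::real^3. outer n n)"
  unfolding outer_def by (intro continuous_intros)

lemma Pm_meas:
  assumes "nv \<in> borel_measurable M" shows "(\<lambda>x. Pm r (nv x)) \<in> borel_measurable M"
proof -
  have "continuous_on UNIV (\<lambda>n. Pm r n)" unfolding Pm_def outer_def by (intro continuous_intros)
  from measurable_compose[OF assms borel_measurable_continuous_onI[OF this]] show ?thesis .
qed


lemma per_h:
  fixes G Gn :: "real^3 \<Rightarrow> real^3^3" and nv yy :: "real^3 \<Rightarrow> real^3"
  assumes W: "assumption_W C q rW W" and S: "bounded S" "open S"
    and h: "0 < h" "h \<le> 1" "\<bar>h * rbar\<bar> \<le> 1/2"
    and y: "H1 (Omega S) yy G" and nn: "H1 (Omega_top S) nv Gn"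
    and nS2: "AE x in lebesgue_on (Omega_top S). norm (nv x) = 1"
    and E: "energy S W epsbar rbar h G nv Gn \<le> ennreal c" and c: "0 \<le> c" and eps: "epsbar > 0"
    and p: "1 < p" "p < 2" "q = 4 * p / (2 - p)"
  defines "\<mu> \<equiv> measure lebesgue (Omega S)"
  shows "AE x in lebesgue_on (Omega S). det (nabla_h h (G x)) > 0"
    and "(\<integral>\<^sup>+x\<in>Omega_top S. ennreal ((norm (nabla_h h (Gn x) ** matrix_inv (nabla_h h (G x))))\<^sup>2
                          * \<bar>det (nabla_h h (G x))\<bar>) \<partial>lebesgue) \<le> ennreal (c / epsbar\<^sup>2)"
    and "ennreal (1 / h\<^sup>2) * (\<integral>\<^sup>+x\<in>Omega S. ennreal ((dist_SO3 (nabla_h h (G x)))\<^sup>2) \<partial>lebesgue)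
           \<le> ennreal (73 * C * c + 288 * rbar\<^sup>2 * \<mu>)"
    and "(\<integral>\<^sup>+x\<in>Omega S. ennreal (norm (nabla_h h (G x)) powr q)
                          + neg_pow (det (nabla_h h (G x))) (q / 2) \<partial>lebesgue)
           \<le> ennreal ((6 powr q + 1) * C * (2 * c + C * \<mu>))"
    and "(\<integral>\<^sup>+x\<in>Omega_top S. ennreal (norm (nabla_h h (Gn x)) powr p) \<partial>lebesgue)
           \<le> ennreal (c / epsbar\<^sup>2 + (6 powr q + 1) * C * (2 * c + C * \<mu>))"
proof -
  define \<Omega> where "\<Omega> = Omega S"
  define \<Omega>t where "\<Omega>t = Omega_top S"
  define \<Omega>b where "\<Omega>b = \<Omega> - \<Omega>t"
  define F where "F x = nabla_h h (G x)" for x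
  have sO: "\<Omega> \<in> sets lebesgue" unfolding \<Omega>_def by (intro open_leb open_Omega S)
  have sOt: "\<Omega>t \<in> sets lebesgue" unfolding \<Omega>t_def by (intro open_leb open_Omega_top S)
  have sOb: "\<Omega>b \<in> sets lebesgue" unfolding \<Omega>b_def using sO sOt by auto
  have tO: "\<Omega>t \<subseteq> \<Omega>" unfolding \<Omega>_def \<Omega>t_def by (rule Omega_top_sub)
  have bO: "\<Omega>b \<subseteq> \<Omega>" unfolding \<Omega>b_def by auto
  have Gm: "G \<in> borel_measurable (lebesgue_on \<Omega>)"
    using y unfolding H1_def L2_on_def \<Omega>_def by blast
  have Fm: "F \<in> borel_measurable (lebesgue_on \<Omega>)"
    unfolding F_def by (rule measurable_compose[OF Gm nabla_meas])
  have nm: "nv \<in> borel_measurable (lebesgue_on \<Omega>t)"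
    using nn unfolding H1_def L2_on_def \<Omega>t_def by blast
  define D where "D = {x \<in> \<Omega>. det (F x) \<le> 0}"
  have Dm: "D \<in> sets lebesgue"
  proof -
    have "D = {x \<in> space (lebesgue_on \<Omega>). det (F x) \<le> 0}" by (simp add: D_def)
    also have "\<dots> \<in> sets (lebesgue_on \<Omega>)"
      using measurable_compose[OF Fm det_meas] by measurable
    finally show ?thesis using sO by (simp add: sets_restrict_space_iff)
  qed
  define T1 where "T1 = ennreal (1 / h\<^sup>2) * (\<integral>\<^sup>+x\<in>\<Omega>b. W (x$3) (F x) \<partial>lebesgue)"
  define T2 where "T2 = ennreal (1 / h\<^sup>2) * (\<integral>\<^sup>+x\<in>\<Omega>t. W (x$3) (inv_sqrt (L_h rbar h (nv x)) ** F x) \<partial>lebesgue)"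
  define T3 where "T3 = ennreal (epsbar\<^sup>2) * (\<integral>\<^sup>+x\<in>\<Omega>t.
              ennreal ((norm (nabla_h h (Gn x) ** matrix_inv (F x)))\<^sup>2 * det (F x)) \<partial>lebesgue)"
  have Eeq: "energy S W epsbar rbar h G nv Gn = (if emeasure lebesgue D > 0 then \<infinity> else T1 + T2 + T3)"
    unfolding energy_def T1_def T2_def T3_def D_def F_def \<Omega>_def \<Omega>t_def \<Omega>b_def ..
  have D0: "emeasure lebesgue D = 0"
  proof (rule ccontr)
    assume "emeasure lebesgue D \<noteq> 0"
    then have "energy S W epsbar rbar h G nv Gn = \<infinity>" unfolding Eeq by (simp add: zero_less_iff_neq_zero)
    then show False using E by (simp add: top_unique)
  qed
  have T123: "T1 + T2 + T3 \<le> ennreal c" using E D0 unfolding Eeq by simp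
  have T1c: "T1 \<le> ennreal c" and T2c: "T2 \<le> ennreal c" and T3c: "T3 \<le> ennreal c"
    using T123 by (auto intro: order_trans[OF _ T123] add_increasing add_increasing2)
  have AEleb: "AE x in lebesgue. x \<in> \<Omega> \<longrightarrow> det (F x) > 0"
  proof -
    have "AE x in lebesgue. x \<notin> D" using Dm D0 by (intro AE_not_in) (simp add: null_sets_def del: emeasure_completion)
    then show ?thesis by eventually_elim (auto simp: D_def)
  qed
  have AEO: "AE x in lebesgue_on \<Omega>. det (F x) > 0"
    using AEleb sO by (simp add: AE_restrict_space_iff)
  show "AE x in lebesgue_on (Omega S). det (nabla_h h (G x)) > 0"
    using AEO unfolding \<Omega>_def F_def .
  have AEt: "AE x in lebesgue_on \<Omega>t. det (F x) > 0"
    using AEleb sOt tO by (simp add: AE_restrict_space_iff) (auto elim!: eventually_mono)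
  have I3: "(\<integral>\<^sup>+x\<in>\<Omega>t. ennreal ((norm (nabla_h h (Gn x) ** matrix_inv (F x)))\<^sup>2 * \<bar>det (F x)\<bar>) \<partial>lebesgue)
      = (\<integral>\<^sup>+x\<in>\<Omega>t. ennreal ((norm (nabla_h h (Gn x) ** matrix_inv (F x)))\<^sup>2 * det (F x)) \<partial>lebesgue)"
  proof -
    have "AE x in lebesgue. x \<in> \<Omega>t \<longrightarrow> det (F x) > 0" using AEt sOt by (simp add: AE_restrict_space_iff)
    then show ?thesis by (intro nn_integral_cong_AE) (auto elim!: eventually_mono)
  qed
  have I3c: "(\<integral>\<^sup>+x\<in>\<Omega>t. ennreal ((norm (nabla_h h (Gn x) ** matrix_inv (F x)))\<^sup>2 * \<bar>det (F x)\<bar>) \<partial>lebesgue) \<le> ennreal (c / epsbar\<^sup>2)"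
  proof -
    let ?I = "(\<integral>\<^sup>+x\<in>\<Omega>t. ennreal ((norm (nabla_h h (Gn x) ** matrix_inv (F x)))\<^sup>2 * det (F x)) \<partial>lebesgue)"
    have "?I = ennreal (1 / epsbar\<^sup>2) * T3"
      using eps by (simp add: T3_def mult.assoc[symmetric] ennreal_mult[symmetric])
    also have "\<dots> \<le> ennreal (1 / epsbar\<^sup>2) * ennreal c" using T3c by (rule mult_left_mono) simp
    also have "\<dots> = ennreal (c / epsbar\<^sup>2)" using c by (simp add: ennreal_mult[symmetric])
    finally show ?thesis unfolding I3 .
  qed
  show "(\<integral>\<^sup>+x\<in>Omega_top S. ennreal ((norm (nabla_h h (Gn x) ** matrix_inv (nabla_h h (G x))))\<^sup>2
                          * \<bar>det (nabla_h h (G x))\<bar>) \<partial>lebesgue) \<le> ennreal (c / epsbar\<^sup>2)"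
    using I3c unfolding \<Omega>t_def F_def .

  have SI: "(\<integral>\<^sup>+x\<in>A. f x \<partial>lebesgue) = integral\<^sup>N (lebesgue_on A) f" if "A \<in> sets lebesgue" for A f
    by (rule nn_integral_restrict_space[symmetric]) (use that in simp)
  have split: "(\<integral>\<^sup>+x\<in>\<Omega>. f x \<partial>lebesgue) = (\<integral>\<^sup>+x\<in>\<Omega>b. f x \<partial>lebesgue) + (\<integral>\<^sup>+x\<in>\<Omega>t. f x \<partial>lebesgue)"
    if fm: "f \<in> borel_measurable (lebesgue_on \<Omega>)" for f
  proof -
    have mb: "(\<lambda>x. f x * indicator \<Omega>b x) \<in> borel_measurable lebesgue"
      using measurable_restrict_mono[OF fm bO] sOb by (simp add: borel_measurable_restrict_space_iff_ennreal)
    have mt: "(\<lambda>x. f x * indicator \<Omega>t x) \<in> borel_measurable lebesgue"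
      using measurable_restrict_mono[OF fm tO] sOt by (simp add: borel_measurable_restrict_space_iff_ennreal)
    have "(\<lambda>x. f x * indicator \<Omega> x) = (\<lambda>x. f x * indicator \<Omega>b x + f x * indicator \<Omega>t x)"
      using tO by (auto simp: \<Omega>b_def indicator_def fun_eq_iff)
    then show ?thesis using nn_integral_add[OF mb mt] by simp
  qed
  have finO: "emeasure lebesgue \<Omega> = ennreal \<mu>"
    using fin_Omega[OF S] unfolding \<mu>_def \<Omega>_def by (simp add: emeasure_eq_ennreal_measure)
  have \<mu>0: "0 \<le> \<mu>" unfolding \<mu>_def by simp
  have emt: "emeasure (lebesgue_on \<Omega>t) \<Omega>t = emeasure lebesgue \<Omega>t"
    using sOt by (simp add: emeasure_restrict_space)
  have emb: "emeasure (lebesgue_on \<Omega>b) \<Omega>b = emeasure lebesgue \<Omega>b"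
    using sOb by (simp add: emeasure_restrict_space)
  have embt: "emeasure lebesgue \<Omega>b + emeasure lebesgue \<Omega>t = ennreal \<mu>"
  proof -
    have "emeasure lebesgue \<Omega>b + emeasure lebesgue \<Omega>t = emeasure lebesgue (\<Omega>b \<union> \<Omega>t)"
      using sOb sOt by (intro plus_emeasure) (auto simp: \<Omega>b_def)
    also have "\<Omega>b \<union> \<Omega>t = \<Omega>" using tO by (auto simp: \<Omega>b_def)
    finally show ?thesis using finO by simp
  qed
  have emt_le: "emeasure lebesgue \<Omega>t \<le> ennreal \<mu>" using embt by (metis add_increasing order_refl zero_le)
  define r where "r = r_h rbar h"
  have r1: "1/2 \<le> r" and r2: "r \<le> 3/2" and rr: "r - 1 = h * rbar"
    using h(3) by (auto simp: r_def r_h_def abs_le_iff)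
  have r0: "r_h rbar h > 0" using r1 by (simp add: r_def)
  note sc = scal[OF r1 r2]
  have Qb: "norm (Qm r n) \<le> 6" "norm (Qm r n - mat 1) \<le> 6 * \<bar>h * rbar\<bar>" if "norm n = 1" for n
    using Qbounds[OF r1 r2 that sc(1) sc(2) _ sc(3)] rr by (auto simp: Qm_def)
  note PQ' = PQ[OF r0, folded r_def]
  define Wb where "Wb x = W (x$3) (F x)" for x
  define Wt where "Wt x = W (x$3) (Pm r (nv x) ** F x)" for x
  have Wbm: "Wb \<in> borel_measurable (lebesgue_on \<Omega>b)"
    unfolding Wb_def by (rule Wcomp[OF W _ measurable_restrict_mono[OF Fm bO]]) (use bO in \<open>simp add: \<Omega>_def\<close>)
  have Wtm: "Wt \<in> borel_measurable (lebesgue_on \<Omega>t)"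
    unfolding Wt_def
    by (rule Wcomp[OF W _ mult_meas[OF Pm_meas[OF nm] measurable_restrict_mono[OF Fm tO]]])
       (use tO in \<open>simp add: \<Omega>_def\<close>)
  have hh: "ennreal (h\<^sup>2) * ennreal (1 / h\<^sup>2) = 1" using h by (simp add: ennreal_mult[symmetric])
  have IWb: "integral\<^sup>N (lebesgue_on \<Omega>b) Wb \<le> ennreal (h\<^sup>2 * c)"
  proof -
    have "integral\<^sup>N (lebesgue_on \<Omega>b) Wb = ennreal (h\<^sup>2) * T1"
      unfolding T1_def SI[OF sOb] Wb_def by (simp add: mult.assoc[symmetric] hh)
    also have "\<dots> \<le> ennreal (h\<^sup>2) * ennreal c" using T1c by (rule mult_left_mono) simp
    finally show ?thesis using c by (simp add: ennreal_mult)
  qed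
  have IWt: "integral\<^sup>N (lebesgue_on \<Omega>t) Wt \<le> ennreal (h\<^sup>2 * c)"
  proof -
    have "integral\<^sup>N (lebesgue_on \<Omega>t) Wt = integral\<^sup>N (lebesgue_on \<Omega>t) (\<lambda>x. W (x$3) (inv_sqrt (L_h rbar h (nv x)) ** F x))"
      using nS2 unfolding \<Omega>t_def[symmetric]
      by (intro nn_integral_cong_AE) (auto elim!: eventually_mono simp: Wt_def PQ'(1))
    also have "\<dots> = ennreal (h\<^sup>2) * T2"
      unfolding T2_def SI[OF sOt] by (simp add: mult.assoc[symmetric] hh)
    also have "\<dots> \<le> ennreal (h\<^sup>2) * ennreal c" using T2c by (rule mult_left_mono) simp
    finally show ?thesis using c by (simp add: ennreal_mult)
  qed
  have x3: "-1/2 < x$3 \<and> x$3 < 1/2" if "x \<in> \<Omega>" for x using that by (simp add: \<Omega>_def Omega_def)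
  have C0: "C > 0" using W by (simp add: assumption_W_def)
  define K where "K = (6 powr q + 1) * C"
  have K0: "0 \<le> K" unfolding K_def using C0 by simp
  define f2 where "f2 x = ennreal (norm (F x) powr q) + neg_pow (det (F x)) (q / 2)" for x
  have f2m: "f2 \<in> borel_measurable (lebesgue_on \<Omega>)"
    unfolding f2_def
    by (intro borel_measurable_add measurable_compose[OF Fm powr_norm_meas]
        measurable_compose[OF measurable_compose[OF Fm det_meas] neg_pow_meas])
  have AEb: "AE x in lebesgue_on \<Omega>b. det (F x) > 0"
    using AEleb sOb bO by (simp add: AE_restrict_space_iff) (auto elim!: eventually_mono)
  have I2b: "integral\<^sup>N (lebesgue_on \<Omega>b) f2 \<le> ennreal K * (ennreal (h\<^sup>2 * c) + ennreal C * emeasure lebesgue \<Omega>b)"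
  proof -
    have "integral\<^sup>N (lebesgue_on \<Omega>b) f2 \<le> (\<integral>\<^sup>+x. ennreal K * (Wb x + ennreal C) \<partial>lebesgue_on \<Omega>b)"
    proof (rule nn_integral_mono_AE)
      show "AE x in lebesgue_on \<Omega>b. f2 x \<le> ennreal K * (Wb x + ennreal C)"
        using AEb
      proof (rule AE_mp[OF _ AE_I2])
        fix x assume xb: "x \<in> space (lebesgue_on \<Omega>b)"
        then have xO: "x \<in> \<Omega>" using bO by auto
        show "det (F x) > 0 \<longrightarrow> f2 x \<le> ennreal K * (Wb x + ennreal C)"
          using pw2[OF W _ _ _ refl, of "x$3" "F x"] x3[OF xO]
          unfolding f2_def Wb_def K_def by simp
      qed
    qed
    also have "\<dots> = ennreal K * (integral\<^sup>N (lebesgue_on \<Omega>b) Wb + ennreal C * emeasure lebesgue \<Omega>b)"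
      using Wbm by (simp add: nn_integral_add nn_integral_cmult emb)
    also have "\<dots> \<le> ennreal K * (ennreal (h\<^sup>2 * c) + ennreal C * emeasure lebesgue \<Omega>b)"
      by (intro mult_left_mono add_mono IWb) auto
    finally show ?thesis .
  qed
  have I2t: "integral\<^sup>N (lebesgue_on \<Omega>t) f2 \<le> ennreal K * (ennreal (h\<^sup>2 * c) + ennreal C * emeasure lebesgue \<Omega>t)"
  proof -
    have "integral\<^sup>N (lebesgue_on \<Omega>t) f2 \<le> (\<integral>\<^sup>+x. ennreal K * (Wt x + ennreal C) \<partial>lebesgue_on \<Omega>t)"
    proof (rule nn_integral_mono_AE)
      have "AE x in lebesgue_on \<Omega>t. det (F x) > 0 \<and> norm (nv x) = 1"
        using AEt nS2 unfolding \<Omega>t_def[symmetric] by eventually_elim simp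
      then show "AE x in lebesgue_on \<Omega>t. f2 x \<le> ennreal K * (Wt x + ennreal C)"
      proof (rule AE_mp[OF _ AE_I2])
        fix x assume xt: "x \<in> space (lebesgue_on \<Omega>t)"
        then have xO: "x \<in> \<Omega>" using tO by auto
        show "det (F x) > 0 \<and> norm (nv x) = 1 \<longrightarrow> f2 x \<le> ennreal K * (Wt x + ennreal C)"
        proof
          assume a: "det (F x) > 0 \<and> norm (nv x) = 1"
          then have n1: "norm (nv x) = 1" by simp
          have dd: "det (Pm r (nv x) ** F x) = det (F x)" by (simp add: det_mul PQ'(3)[OF n1])
          have "F x = Qm r (nv x) ** (Pm r (nv x) ** F x)"
            by (simp add: matrix_mul_assoc PQ'(2)[OF n1])
          then have "norm (F x) \<le> norm (Qm r (nv x)) * norm (Pm r (nv x) ** F x)" by (metis frob)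
          also have "\<dots> \<le> 6 * norm (Pm r (nv x) ** F x)" using Qb(1)[OF n1] by (intro mult_right_mono) auto
          finally have nF: "norm (F x) \<le> 6 * norm (Pm r (nv x) ** F x)" .
          show "f2 x \<le> ennreal K * (Wt x + ennreal C)"
            using pw2[OF W _ _ _ dd[symmetric] nF] x3[OF xO] a dd
            unfolding f2_def Wt_def K_def by simp
        qed
      qed
    qed
    also have "\<dots> = ennreal K * (integral\<^sup>N (lebesgue_on \<Omega>t) Wt + ennreal C * emeasure lebesgue \<Omega>t)"
      using Wtm by (simp add: nn_integral_add nn_integral_cmult emt)
    also have "\<dots> \<le> ennreal K * (ennreal (h\<^sup>2 * c) + ennreal C * emeasure lebesgue \<Omega>t)"
      by (intro mult_left_mono add_mono IWt) auto
    finally show ?thesis .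
  qed
  have I2: "(\<integral>\<^sup>+x\<in>\<Omega>. f2 x \<partial>lebesgue) \<le> ennreal (K * (2 * c + C * \<mu>))"
  proof -
    have "(\<integral>\<^sup>+x\<in>\<Omega>. f2 x \<partial>lebesgue) = integral\<^sup>N (lebesgue_on \<Omega>b) f2 + integral\<^sup>N (lebesgue_on \<Omega>t) f2"
      using split[OF f2m] by (simp add: SI[OF sOb] SI[OF sOt])
    also have "\<dots> \<le> ennreal K * (ennreal (h\<^sup>2 * c) + ennreal C * emeasure lebesgue \<Omega>b)
                  + ennreal K * (ennreal (h\<^sup>2 * c) + ennreal C * emeasure lebesgue \<Omega>t)"
      by (rule add_mono[OF I2b I2t])
    also have "\<dots> = ennreal K * (ennreal (h\<^sup>2 * c) + ennreal (h\<^sup>2 * c) + ennreal C * (emeasure lebesgue \<Omega>b + emeasure lebesgue \<Omega>t))"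
      by (simp add: algebra_simps)
    also have "\<dots> = ennreal K * (ennreal (h\<^sup>2 * c) + ennreal (h\<^sup>2 * c) + ennreal C * ennreal \<mu>)"
      unfolding embt ..
    also have "\<dots> = ennreal (K * (h\<^sup>2 * c + h\<^sup>2 * c + C * \<mu>))"
    proof -
      have e1: "ennreal C * ennreal \<mu> = ennreal (C * \<mu>)" by (rule ennreal_mult[symmetric]) (use C0 \<mu>0 in auto)
      have e2: "ennreal (h\<^sup>2 * c) + ennreal (h\<^sup>2 * c) + ennreal (C * \<mu>) = ennreal (h\<^sup>2 * c + h\<^sup>2 * c + C * \<mu>)"
        using c C0 \<mu>0 by (simp del: ennreal_plus add: ennreal_plus[symmetric])
      show ?thesis unfolding e1 e2 by (rule ennreal_mult[symmetric]) (use K0 c C0 \<mu>0 in auto)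
    qed
    also have "\<dots> \<le> ennreal (K * (2 * c + C * \<mu>))"
    proof (intro ennreal_leI mult_left_mono K0)
      have "h\<^sup>2 \<le> 1" using h by (simp add: power_le_one)
      then have "h\<^sup>2 * c \<le> c" using c by (simp add: mult_left_le_one_le)
      then show "h\<^sup>2 * c + h\<^sup>2 * c + C * \<mu> \<le> 2 * c + C * \<mu>" by linarith
    qed
    finally show ?thesis .
  qed
  have I2': "(\<integral>\<^sup>+x\<in>\<Omega>. f2 x \<partial>lebesgue) \<le> ennreal ((6 powr q + 1) * C * (2 * c + C * \<mu>))"
    using I2 by (simp add: K_def)
  show "ennreal (1 / h\<^sup>2) * (\<integral>\<^sup>+x\<in>Omega S. ennreal ((dist_SO3 (nabla_h h (G x)))\<^sup>2) \<partial>lebesgue)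
           \<le> ennreal (73 * C * c + 288 * rbar\<^sup>2 * \<mu>)"
  proof -
    define d2 where "d2 x = ennreal ((dist_SO3 (F x))\<^sup>2)" for x
    have d2m: "d2 \<in> borel_measurable (lebesgue_on \<Omega>)"
      unfolding d2_def by (rule measurable_compose[OF Fm dist_meas])
    have Ib: "integral\<^sup>N (lebesgue_on \<Omega>b) d2 \<le> ennreal (C * (h\<^sup>2 * c))"
    proof -
      have "integral\<^sup>N (lebesgue_on \<Omega>b) d2 \<le> (\<integral>\<^sup>+x. ennreal C * Wb x \<partial>lebesgue_on \<Omega>b)"
      proof (rule nn_integral_mono)
        fix x assume "x \<in> space (lebesgue_on \<Omega>b)"
        then have "x \<in> \<Omega>" using bO by auto
        then show "d2 x \<le> ennreal C * Wb x"
          unfolding d2_def Wb_def using W_facts(1)[OF W] x3 by blast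
      qed
      also have "\<dots> = ennreal C * integral\<^sup>N (lebesgue_on \<Omega>b) Wb" by (rule nn_integral_cmult[OF Wbm])
      also have "\<dots> \<le> ennreal C * ennreal (h\<^sup>2 * c)" using IWb by (rule mult_left_mono) simp
      finally show ?thesis using C0 c by (simp add: ennreal_mult)
    qed
    have It: "integral\<^sup>N (lebesgue_on \<Omega>t) d2 \<le> ennreal (72 * C * (h\<^sup>2 * c) + 288 * (h * rbar)\<^sup>2 * \<mu>)"
    proof -
      have "integral\<^sup>N (lebesgue_on \<Omega>t) d2 \<le> (\<integral>\<^sup>+x. ennreal (72 * C) * Wt x + ennreal (288 * (h * rbar)\<^sup>2) \<partial>lebesgue_on \<Omega>t)"
      proof (rule nn_integral_mono_AE)
        show "AE x in lebesgue_on \<Omega>t. d2 x \<le> ennreal (72 * C) * Wt x + ennreal (288 * (h * rbar)\<^sup>2)"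
          using nS2 unfolding \<Omega>t_def[symmetric]
        proof (rule AE_mp[OF _ AE_I2])
          fix x assume xt: "x \<in> space (lebesgue_on \<Omega>t)"
          show "norm (nv x) = 1 \<longrightarrow> d2 x \<le> ennreal (72 * C) * Wt x + ennreal (288 * (h * rbar)\<^sup>2)"
          proof
            assume n1: "norm (nv x) = 1"
            have xO: "x \<in> \<Omega>" using xt tO by auto
            have ds: "(dist_SO3 (F x))\<^sup>2 \<le> 72 * (dist_SO3 (Pm r (nv x) ** F x))\<^sup>2 + 8 * (6 * \<bar>h * rbar\<bar>)\<^sup>2"
              by (rule dist_bound_sq[OF PQ'(2)[OF n1] Qb[OF n1]])
            have e8: "8 * (6 * \<bar>h * rbar\<bar>)\<^sup>2 = 288 * (h * rbar)\<^sup>2" by (simp add: power2_eq_square)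
            have "d2 x \<le> ennreal (72 * (dist_SO3 (Pm r (nv x) ** F x))\<^sup>2 + 288 * (h * rbar)\<^sup>2)"
              unfolding d2_def using ds e8 by (intro ennreal_leI) simp
            also have "\<dots> = ennreal 72 * ennreal ((dist_SO3 (Pm r (nv x) ** F x))\<^sup>2) + ennreal (288 * (h * rbar)\<^sup>2)"
              by (simp add: ennreal_mult)
            also have "\<dots> \<le> ennreal 72 * (ennreal C * Wt x) + ennreal (288 * (h * rbar)\<^sup>2)"
              unfolding Wt_def using W_facts(1)[OF W] x3[OF xO] by (intro add_mono mult_left_mono) auto
            also have "\<dots> = ennreal (72 * C) * Wt x + ennreal (288 * (h * rbar)\<^sup>2)"
              using C0 by (simp add: ennreal_mult mult.assoc)
            finally show "d2 x \<le> ennreal (72 * C) * Wt x + ennreal (288 * (h * rbar)\<^sup>2)" .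
          qed
        qed
      qed
      also have "\<dots> = ennreal (72 * C) * integral\<^sup>N (lebesgue_on \<Omega>t) Wt + ennreal (288 * (h * rbar)\<^sup>2) * emeasure lebesgue \<Omega>t"
        using Wtm by (simp add: nn_integral_add nn_integral_cmult emt)
      also have "\<dots> \<le> ennreal (72 * C) * ennreal (h\<^sup>2 * c) + ennreal (288 * (h * rbar)\<^sup>2) * ennreal \<mu>"
        by (intro add_mono mult_left_mono IWt emt_le) auto
      also have "\<dots> = ennreal (72 * C * (h\<^sup>2 * c) + 288 * (h * rbar)\<^sup>2 * \<mu>)"
        using C0 c \<mu>0 by (simp add: ennreal_mult)
      finally show ?thesis .
    qed
    have "ennreal (1 / h\<^sup>2) * (\<integral>\<^sup>+x\<in>\<Omega>. d2 x \<partial>lebesgue)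
        = ennreal (1 / h\<^sup>2) * (integral\<^sup>N (lebesgue_on \<Omega>b) d2 + integral\<^sup>N (lebesgue_on \<Omega>t) d2)"
      using split[OF d2m] by (simp add: SI[OF sOb] SI[OF sOt])
    also have "\<dots> \<le> ennreal (1 / h\<^sup>2) * (ennreal (C * (h\<^sup>2 * c)) + ennreal (72 * C * (h\<^sup>2 * c) + 288 * (h * rbar)\<^sup>2 * \<mu>))"
      by (intro mult_left_mono add_mono Ib It) simp
    also have "\<dots> = ennreal (1 / h\<^sup>2) * ennreal (C * (h\<^sup>2 * c) + (72 * C * (h\<^sup>2 * c) + 288 * (h * rbar)\<^sup>2 * \<mu>))"
      by (rule arg_cong[where f="\<lambda>z. ennreal (1 / h\<^sup>2) * z"], rule ennreal_plus[symmetric])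
         (use C0 c \<mu>0 in auto)
    also have "\<dots> = ennreal (1 / h\<^sup>2 * (C * (h\<^sup>2 * c) + (72 * C * (h\<^sup>2 * c) + 288 * (h * rbar)\<^sup>2 * \<mu>)))"
      by (rule ennreal_mult[symmetric]) (use C0 c \<mu>0 in auto)
    also have "1 / h\<^sup>2 * (C * (h\<^sup>2 * c) + (72 * C * (h\<^sup>2 * c) + 288 * (h * rbar)\<^sup>2 * \<mu>)) = 73 * C * c + 288 * rbar\<^sup>2 * \<mu>"
      using h by (simp add: field_simps power2_eq_square)
    finally show ?thesis unfolding d2_def \<Omega>_def F_def .
  qed
  show "(\<integral>\<^sup>+x\<in>Omega S. ennreal (norm (nabla_h h (G x)) powr q)
                          + neg_pow (det (nabla_h h (G x))) (q / 2) \<partial>lebesgue)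
           \<le> ennreal ((6 powr q + 1) * C * (2 * c + C * \<mu>))"
    using I2' unfolding f2_def F_def \<Omega>_def .
  show "(\<integral>\<^sup>+x\<in>Omega_top S. ennreal (norm (nabla_h h (Gn x)) powr p) \<partial>lebesgue)
           \<le> ennreal (c / epsbar\<^sup>2 + (6 powr q + 1) * C * (2 * c + C * \<mu>))"
  proof -
    define a3 where "a3 x = ennreal ((norm (nabla_h h (Gn x) ** matrix_inv (F x)))\<^sup>2 * \<bar>det (F x)\<bar>)" for x
    have f2t: "f2 \<in> borel_measurable (lebesgue_on \<Omega>t)" by (rule measurable_restrict_mono[OF f2m tO])
    have "(\<integral>\<^sup>+x\<in>\<Omega>t. ennreal (norm (nabla_h h (Gn x)) powr p) \<partial>lebesgue)
        = (\<integral>\<^sup>+x. ennreal (norm (nabla_h h (Gn x)) powr p) \<partial>lebesgue_on \<Omega>t)" by (rule SI[OF sOt])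
    also have "\<dots> \<le> (\<integral>\<^sup>+x. a3 x + f2 x \<partial>lebesgue_on \<Omega>t)"
    proof (rule nn_integral_mono_AE)
      show "AE x in lebesgue_on \<Omega>t. ennreal (norm (nabla_h h (Gn x)) powr p) \<le> a3 x + f2 x"
        using AEt
      proof eventually_elim
        case (elim x)
        show ?case unfolding a3_def f2_def by (rule pw4[OF p elim])
      qed
    qed
    also have "\<dots> \<le> integral\<^sup>N (lebesgue_on \<Omega>t) a3 + integral\<^sup>N (lebesgue_on \<Omega>t) f2"
      by (rule nn_integral_add_le[OF f2t])
    also have "\<dots> \<le> ennreal (c / epsbar\<^sup>2) + ennreal ((6 powr q + 1) * C * (2 * c + C * \<mu>))"
    proof (rule add_mono)
      show "integral\<^sup>N (lebesgue_on \<Omega>t) a3 \<le> ennreal (c / epsbar\<^sup>2)"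
        using I3c unfolding SI[OF sOt] a3_def .
      have "integral\<^sup>N (lebesgue_on \<Omega>t) f2 = (\<integral>\<^sup>+x\<in>\<Omega>t. f2 x \<partial>lebesgue)" by (rule SI[OF sOt, symmetric])
      also have "\<dots> \<le> (\<integral>\<^sup>+x\<in>\<Omega>. f2 x \<partial>lebesgue)"
        using tO by (intro nn_integral_mono) (auto simp: indicator_def)
      finally show "integral\<^sup>N (lebesgue_on \<Omega>t) f2 \<le> ennreal ((6 powr q + 1) * C * (2 * c + C * \<mu>))"
        using I2' by (rule order_trans)
    qed
    also have "\<dots> = ennreal (c / epsbar\<^sup>2 + (6 powr q + 1) * C * (2 * c + C * \<mu>))"
      using c C0 \<mu>0 by (simp del: ennreal_plus add: ennreal_plus[symmetric])
    finally show ?thesis unfolding \<Omega>t_def .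
  qed
qed



theorem lemma4p1:
  fixes C_W q_W p epsbar rbar :: real
    and r_W :: "real \<Rightarrow> ereal"
    and W :: "real \<Rightarrow> real^3^3 \<Rightarrow> ennreal"
    and S :: "(real^2) set"
    and y :: "real \<Rightarrow> real^3 \<Rightarrow> real^3" and Gy :: "real \<Rightarrow> real^3 \<Rightarrow> real^3^3"
    and n :: "real \<Rightarrow> real^3 \<Rightarrow> real^3" and Gn :: "real \<Rightarrow> real^3 \<Rightarrow> real^3^3"
  assumes W: "assumption_W C_W q_W r_W W"
    and eps: "epsbar > 0"
    and S: "bounded S" "open S"
    and y: "\<And>h. h > 0 \<Longrightarrow> H1 (Omega S) (y h) (Gy h)"
    and n: "\<And>h. h > 0 \<Longrightarrow> H1 (Omega_top S) (n h) (Gn h)"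
    and nS2: "\<And>h. h > 0 \<Longrightarrow> AE x in lebesgue_on (Omega_top S). norm (n h x) = 1"
    and bound: "Limsup (at_right 0) (\<lambda>h. energy S W epsbar rbar h (Gy h) (n h) (Gn h)) < \<infinity>"
    and p: "1 < p" "p < 2" "q_W = 4 * p / (2 - p)"
  shows "(Limsup (at_right 0) (\<lambda>h. ennreal (1 / h\<^sup>2) *
            (\<integral>\<^sup>+x\<in>Omega S. ennreal ((dist_SO3 (nabla_h h (Gy h x)))\<^sup>2) \<partial>lebesgue)) < \<infinity>) \<and>
         (Limsup (at_right 0) (\<lambda>h.
            \<integral>\<^sup>+x\<in>Omega S. ennreal (norm (nabla_h h (Gy h x)) powr q_W)
                          + neg_pow (det (nabla_h h (Gy h x))) (q_W / 2) \<partial>lebesgue) < \<infinity>) \<and>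
         (Limsup (at_right 0) (\<lambda>h.
            \<integral>\<^sup>+x\<in>Omega_top S. ennreal ((norm (nabla_h h (Gn h x) ** matrix_inv (nabla_h h (Gy h x))))\<^sup>2
                          * \<bar>det (nabla_h h (Gy h x))\<bar>) \<partial>lebesgue) < \<infinity>) \<and>
         (Limsup (at_right 0) (\<lambda>h.
            \<integral>\<^sup>+x\<in>Omega_top S. ennreal (norm (nabla_h h (Gn h x)) powr p) \<partial>lebesgue) < \<infinity>) \<and>
         (\<exists>hbar > 0. \<forall>h. 0 < h \<and> h \<le> hbar \<longrightarrow>
            (AE x in lebesgue_on (Omega S). det (nabla_h h (Gy h x)) > 0))"
  proof -
  let ?E = "\<lambda>h. energy S W epsbar rbar h (Gy h) (n h) (Gn h)"
  define L where "L = Limsup (at_right 0) ?E"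
  have Lfin: "L \<noteq> \<infinity>" using bound unfolding L_def by simp
  define c where "c = enn2real L + 1"
  have c0: "0 \<le> c" unfolding c_def by simp
  have "L < ennreal c"
  proof -
    have "L = ennreal (enn2real L)" using Lfin by (simp add: ennreal_enn2real_if)
    also have "\<dots> < ennreal c" unfolding c_def by (simp add: ennreal_lessI)
    finally show ?thesis .
  qed
  then have ev: "eventually (\<lambda>h. ?E h < ennreal c) (at_right 0)"
    unfolding L_def by (rule Limsup_lessD)
  then have "\<exists>b>0. \<forall>y>0. y < b \<longrightarrow> ?E y < ennreal c"
    using eventually_at_right[of "0::real" 1] by simp
  then obtain b where b: "b > 0" "\<And>h. 0 < h \<Longrightarrow> h < b \<Longrightarrow> ?E h < ennreal c"
    by auto
  define d where "d = min b (min 1 (1 / (2 * (\<bar>rbar\<bar> + 1))))"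
  have d0: "d > 0" using b by (simp add: d_def)
  have hyp: "0 < h \<and> h \<le> 1 \<and> \<bar>h * rbar\<bar> \<le> 1/2 \<and> ?E h \<le> ennreal c" if h: "0 < h" "h < d" for h
  proof -
    have "h < 1 / (2 * (\<bar>rbar\<bar> + 1))" using h by (simp add: d_def)
    then have hh: "h * (2 * (\<bar>rbar\<bar> + 1)) < 1" by (simp add: field_simps)
    then have "\<bar>h * rbar\<bar> \<le> 1/2" using h by (simp add: abs_mult algebra_simps)
    moreover have "h \<le> 1"
    proof -
      have "h * 1 \<le> h * (2 * (\<bar>rbar\<bar> + 1))" using h by (intro mult_left_mono) auto
      then show ?thesis using hh by linarith
    qed
    moreover have "?E h \<le> ennreal c" using b(2)[of h] h by (simp add: d_def less_imp_le)
    ultimately show ?thesis using h by (simp add: d_def)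
  qed
  have evd: "eventually (\<lambda>h. 0 < h \<and> h < d) (at_right 0)"
    using eventually_at_right[of "0::real" d] d0 by auto
  define \<mu> where "\<mu> = measure lebesgue (Omega S)"
  note PH = per_h[OF W S _ _ _ y n nS2 _ c0 eps p, folded \<mu>_def]
  have ev_le: "eventually (\<lambda>h. X h \<le> K) (at_right 0)" if "\<And>h. 0 < h \<Longrightarrow> h < d \<Longrightarrow> X h \<le> K" for X :: "real \<Rightarrow> ennreal" and K
    using evd by eventually_elim (use that in auto)
  have R1: "Limsup (at_right 0) (\<lambda>h. ennreal (1 / h\<^sup>2) *
            (\<integral>\<^sup>+x\<in>Omega S. ennreal ((dist_SO3 (nabla_h h (Gy h x)))\<^sup>2) \<partial>lebesgue)) \<le> ennreal (73 * C_W * c + 288 * rbar\<^sup>2 * \<mu>)"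
    by (intro Limsup_bounded ev_le) (use hyp PH(3) in blast)
  have R2: "Limsup (at_right 0) (\<lambda>h.
            \<integral>\<^sup>+x\<in>Omega S. ennreal (norm (nabla_h h (Gy h x)) powr q_W)
                          + neg_pow (det (nabla_h h (Gy h x))) (q_W / 2) \<partial>lebesgue) \<le> ennreal ((6 powr q_W + 1) * C_W * (2 * c + C_W * \<mu>))"
    by (intro Limsup_bounded ev_le) (use hyp PH(4) in blast)
  have R3: "Limsup (at_right 0) (\<lambda>h.
            \<integral>\<^sup>+x\<in>Omega_top S. ennreal ((norm (nabla_h h (Gn h x) ** matrix_inv (nabla_h h (Gy h x))))\<^sup>2
                          * \<bar>det (nabla_h h (Gy h x))\<bar>) \<partial>lebesgue) \<le> ennreal (c / epsbar\<^sup>2)"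
    by (intro Limsup_bounded ev_le) (use hyp PH(2) in blast)
  have R4: "Limsup (at_right 0) (\<lambda>h.
            \<integral>\<^sup>+x\<in>Omega_top S. ennreal (norm (nabla_h h (Gn h x)) powr p) \<partial>lebesgue) \<le> ennreal (c / epsbar\<^sup>2 + (6 powr q_W + 1) * C_W * (2 * c + C_W * \<mu>))"
    by (intro Limsup_bounded ev_le) (use hyp PH(5) in blast)
  have R5: "\<exists>hbar > 0. \<forall>h. 0 < h \<and> h \<le> hbar \<longrightarrow>
            (AE x in lebesgue_on (Omega S). det (nabla_h h (Gy h x)) > 0)"
  proof (intro exI[of _ "d/2"] conjI allI impI)
    show "d/2 > 0" using d0 by simp
    fix h assume "0 < h \<and> h \<le> d / 2"
    then have "0 < h" "h < d" using d0 by auto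
    then show "AE x in lebesgue_on (Omega S). det (nabla_h h (Gy h x)) > 0" using hyp PH(1) by blast
  qed
  show ?thesis using R1 R2 R3 R4 R5 by (auto intro: le_less_trans)
qed


end
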